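(* Let $n\ge0$ and let $(\eta,\xi)$ be an $n$-Lie-isoclinism from $\mathfrak g_1$ to $\mathfrak g_2$. Let $\mathcal K=\{(g,h)\in\mathfrak g_1\oplus\mathfrak g_2:\eta(g+\mathcal Z_n^{\mathsf{Lie}}(\mathfrak g_1))=h+\mathcal Z_n^{\mathsf{Lie}}(\mathfrak g_2)\}$, $Z_{\mathfrak g_1}=\{(g,0):g\in\mathcal Z_n^{\mathsf{Lie}}(\mathfrak g_1)\}$, $Z_{\mathfrak g_2}=\{(0,h):h\in\mathcal Z_n^{\mathsf{Lie}}(\mathfrak g_2)\}$. Then: (a) $\mathcal K$ is a subalgebra of $\mathfrak g_1\oplus\mathfrak g_2$; (b) $\gamma_{n+1}^{\mathsf{Lie}}(\mathcal K)=\{(g,\xi(g)):g\in\gamma_{n+1}^{\mathsf{Lie}}(\mathfrak g_1)\}$; (c) $Z_{\mathfrak g_1}$ and $Z_{\mathfrak g_2}$ are two-sided ideals of $\mathcal K$ with $Z_{\mathfrak g_i}\cap\gamma_{n+1}^{\mathsf{Lie}}(\mathcal K)=0$ for $i=1,2$; (d) for $\{i,j\}=\{1,2\}$, $\mathfrak g_i\cong\mathcal K/Z_{\mathfrak g_j}$ and $\mathcal K/Z_{\mathfrak g_j}\sim_n\mathcal K$.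
   Context: All Leibniz algebras are over a field $\mathbb{K}$ with $\frac12\in\mathbb{K}$. A Leibniz algebra is a vector space $\mathfrak g$ with a bilinear bracket $[-,-]$ satisfying $[x,[y,z]]=[[x,y],z]-[[x,z],y]$. For $x,y\in\mathfrak g$ put $[x,y]_{lie}=[x,y]+[y,x]$. For two-sided ideals $\mathfrak m,\mathfrak n$ of $\mathfrak g$, $[\mathfrak m,\mathfrak n]_{\mathsf{Lie}}$ denotes the two-sided ideal of $\mathfrak g$ generated by $\{[m,x]_{lie}: m\in\mathfrak m, x\in\mathfrak n\}$. Lower Lie-central series: $\gamma_1^{\mathsf{Lie}}(\mathfrak g)=\mathfrak g$, $\gamma_i^{\mathsf{Lie}}(\mathfrak g)=[\gamma_{i-1}^{\mathsf{Lie}}(\mathfrak g),\mathfrak g]_{\mathsf{Lie}}$ for $i\ge2$. Upper Lie-central series: $\mathcal Z_0^{\mathsf{Lie}}(\mathfrak g)=0$, $\mathcal Z_i^{\mathsf{Lie}}(\mathfrak g)=\{x\in\mathfrak g:[x,y]_{lie}\in\mathcal Z_{i-1}^{\mathsf{Lie}}(\mathfrak g)\ \text{for all } y\in\mathfrak g\}$ for $i\ge1$. For $n\ge0$, Leibniz algebras $\mathfrak g_1,\mathfrak g_2$ are $n$-Lie-isoclinic, written $\mathfrak g_1\sim_n\mathfrak g_2$, if there exist Leibniz algebra isomorphisms $\eta:\mathfrak g_1/\mathcal Z_n^{\mathsf{Lie}}(\mathfrak g_1)\to\mathfrak g_2/\mathcal Z_n^{\mathsf{Lie}}(\mathfrak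 g_2)$ and $\xi:\gamma_{n+1}^{\mathsf{Lie}}(\mathfrak g_1)\to\gamma_{n+1}^{\mathsf{Lie}}(\mathfrak g_2)$ such that $\xi([\cdots[[x_1,x_2]_{lie},x_3]_{lie},\ldots,x_{n+1}]_{lie})=[\cdots[[y_1,y_2]_{lie},y_3]_{lie},\ldots,y_{n+1}]_{lie}$ whenever $x_i\in\mathfrak g_1$, $y_i\in\mathfrak g_2$ satisfy $\eta(x_i+\mathcal Z_n^{\mathsf{Lie}}(\mathfrak g_1))=y_i+\mathcal Z_n^{\mathsf{Lie}}(\mathfrak g_2)$ for $i=1,\ldots,n+1$; $(\eta,\xi)$ is then called an $n$-Lie-isoclinism from $\mathfrak g_1$ to $\mathfrak g_2$. *)

theory Defs
  imports Main
begin

record ('k, 'a) lalg =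
  lcarrier :: "'a set"
  ladd :: "'a \<Rightarrow> 'a \<Rightarrow> 'a"
  lzero :: 'a
  lsmult :: "'k \<Rightarrow> 'a \<Rightarrow> 'a"
  lbr :: "'a \<Rightarrow> 'a \<Rightarrow> 'a"

definition lsub :: "('k::field, 'a) lalg \<Rightarrow> 'a \<Rightarrow> 'a \<Rightarrow> 'a" where
  "lsub L x y = ladd L x (lsmult L (-1) y)"

definition vector_space_str :: "('k::field, 'a) lalg \<Rightarrow> bool" where
  "vector_space_str L \<longleftrightarrow>
     lzero L \<in> lcarrier L \<and>
     (\<forall>x\<in>lcarrier L. \<forall>y\<in>lcarrier L. ladd L x y \<in> lcarrier L) \<and>
     (\<forall>c. \<forall>x\<in>lcarrier L. lsmult L c x \<in> lcarrier L) \<and>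
     (\<forall>x\<in>lcarrier L. \<forall>y\<in>lcarrier L. \<forall>z\<in>lcarrier L.
        ladd L (ladd L x y) z = ladd L x (ladd L y z)) \<and>
     (\<forall>x\<in>lcarrier L. \<forall>y\<in>lcarrier L. ladd L x y = ladd L y x) \<and>
     (\<forall>x\<in>lcarrier L. ladd L x (lzero L) = x) \<and>
     (\<forall>x\<in>lcarrier L. \<exists>y\<in>lcarrier L. ladd L x y = lzero L) \<and>
     (\<forall>c. \<forall>x\<in>lcarrier L. \<forall>y\<in>lcarrier L.
        lsmult L c (ladd L x y) = ladd L (lsmult L c x) (lsmult L c y)) \<and>
     (\<forall>c d. \<forall>x\<in>lcarrier L. lsmult L (c + d) x = ladd L (lsmult L c x) (lsmult L d x)) \<and>
     (\<forall>c d. \<forall>x\<in>lcarrier L. lsmult L (c * d) x = lsmult L c (lsmult L d x)) \<and>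
     (\<forall>x\<in>lcarrier L. lsmult L 1 x = x)"

definition leibniz_algebra :: "('k::field, 'a) lalg \<Rightarrow> bool" where
  "leibniz_algebra L \<longleftrightarrow>
     vector_space_str L \<and>
     (\<forall>x\<in>lcarrier L. \<forall>y\<in>lcarrier L. lbr L x y \<in> lcarrier L) \<and>
     (\<forall>c d. \<forall>x\<in>lcarrier L. \<forall>y\<in>lcarrier L. \<forall>z\<in>lcarrier L.
        lbr L (ladd L (lsmult L c x) (lsmult L d y)) z
          = ladd L (lsmult L c (lbr L x z)) (lsmult L d (lbr L y z)) \<and>
        lbr L z (ladd L (lsmult L c x) (lsmult L d y))
          = ladd L (lsmult L c (lbr L z x)) (lsmult L d (lbr L z y))) \<and>
     (\<forall>x\<in>lcarrier L. \<forall>y\<in>lcarrier L. \<forall>z\<in>lcarrier L.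
        lbr L x (lbr L y z) = lsub L (lbr L (lbr L x y) z) (lbr L (lbr L x z) y))"

definition lie_br :: "('k::field, 'a) lalg \<Rightarrow> 'a \<Rightarrow> 'a \<Rightarrow> 'a" where
  "lie_br L x y = ladd L (lbr L x y) (lbr L y x)"

definition subspace :: "('k::field, 'a) lalg \<Rightarrow> 'a set \<Rightarrow> bool" where
  "subspace L S \<longleftrightarrow> S \<subseteq> lcarrier L \<and> lzero L \<in> S \<and>
     (\<forall>x\<in>S. \<forall>y\<in>S. ladd L x y \<in> S) \<and> (\<forall>c. \<forall>x\<in>S. lsmult L c x \<in> S)"

definition subalgebra :: "('k::field, 'a) lalg \<Rightarrow> 'a set \<Rightarrow> bool" where
  "subalgebra L S \<longleftrightarrow> subspace L S \<and> (\<forall>x\<in>S. \<forall>y\<in>S. lbr L x y \<in> S)"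

definition ideal :: "('k::field, 'a) lalg \<Rightarrow> 'a set \<Rightarrow> bool" where
  "ideal L I \<longleftrightarrow> subspace L I \<and>
     (\<forall>x\<in>lcarrier L. \<forall>i\<in>I. lbr L x i \<in> I \<and> lbr L i x \<in> I)"

definition ideal_gen :: "('k::field, 'a) lalg \<Rightarrow> 'a set \<Rightarrow> 'a set" where
  "ideal_gen L X = \<Inter> {I. ideal L I \<and> X \<subseteq> I}"

definition lie_comm :: "('k::field, 'a) lalg \<Rightarrow> 'a set \<Rightarrow> 'a set \<Rightarrow> 'a set" where
  "lie_comm L M N = ideal_gen L {lie_br L m x | m x. m \<in> M \<and> x \<in> N}"

text \<open>Lower Lie-central series, \<open>lower_lie L i = \<gamma>_i^Lie(L)\<close> for \<open>i \<ge> 1\<close>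
  (index 0 is an unused convention).\<close>
fun lower_lie :: "('k::field, 'a) lalg \<Rightarrow> nat \<Rightarrow> 'a set" where
  "lower_lie L 0 = lcarrier L"
| "lower_lie L (Suc 0) = lcarrier L"
| "lower_lie L (Suc (Suc i)) = lie_comm L (lower_lie L (Suc i)) (lcarrier L)"

fun upper_lie :: "('k::field, 'a) lalg \<Rightarrow> nat \<Rightarrow> 'a set" where
  "upper_lie L 0 = {lzero L}"
| "upper_lie L (Suc i) =
     {x \<in> lcarrier L. \<forall>y\<in>lcarrier L. lie_br L x y \<in> upper_lie L i}"

definition restrict_alg :: "('k, 'a) lalg \<Rightarrow> 'a set \<Rightarrow> ('k, 'a) lalg" where
  "restrict_alg L S = L\<lparr>lcarrier := S\<rparr>"

definition dsum :: "('k, 'a) lalg \<Rightarrow> ('k, 'b) lalg \<Rightarrow> ('k, 'a \<times> 'b) lalg" where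
  "dsum L1 L2 = \<lparr>lcarrier = lcarrier L1 \<times> lcarrier L2,
     ladd = (\<lambda>(a,b) (c,d). (ladd L1 a c, ladd L2 b d)),
     lzero = (lzero L1, lzero L2),
     lsmult = (\<lambda>k (a,b). (lsmult L1 k a, lsmult L2 k b)),
     lbr = (\<lambda>(a,b) (c,d). (lbr L1 a c, lbr L2 b d))\<rparr>"

definition coset :: "('k, 'a) lalg \<Rightarrow> 'a set \<Rightarrow> 'a \<Rightarrow> 'a set" where
  "coset L I x = {ladd L x i | i. i \<in> I}"

definition quot :: "('k, 'a) lalg \<Rightarrow> 'a set \<Rightarrow> ('k, 'a set) lalg" where
  "quot L I = \<lparr>lcarrier = coset L I ` lcarrier L,
     ladd = (\<lambda>A B. coset L I (ladd L (SOME a. a \<in> A) (SOME b. b \<in> B))),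
     lzero = coset L I (lzero L),
     lsmult = (\<lambda>k A. coset L I (lsmult L k (SOME a. a \<in> A))),
     lbr = (\<lambda>A B. coset L I (lbr L (SOME a. a \<in> A) (SOME b. b \<in> B)))\<rparr>"

definition alg_hom :: "('k, 'a) lalg \<Rightarrow> ('k, 'b) lalg \<Rightarrow> ('a \<Rightarrow> 'b) \<Rightarrow> bool" where
  "alg_hom L1 L2 f \<longleftrightarrow> f ` lcarrier L1 \<subseteq> lcarrier L2 \<and>
     (\<forall>x\<in>lcarrier L1. \<forall>y\<in>lcarrier L1.
        f (ladd L1 x y) = ladd L2 (f x) (f y) \<and> f (lbr L1 x y) = lbr L2 (f x) (f y)) \<and>
     (\<forall>c. \<forall>x\<in>lcarrier L1. f (lsmult L1 c x) = lsmult L2 c (f x))"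

definition alg_iso :: "('k, 'a) lalg \<Rightarrow> ('k, 'b) lalg \<Rightarrow> ('a \<Rightarrow> 'b) \<Rightarrow> bool" where
  "alg_iso L1 L2 f \<longleftrightarrow> alg_hom L1 L2 f \<and> bij_betw f (lcarrier L1) (lcarrier L2)"

definition isomorphic :: "('k, 'a) lalg \<Rightarrow> ('k, 'b) lalg \<Rightarrow> bool" where
  "isomorphic L1 L2 \<longleftrightarrow> (\<exists>f. alg_iso L1 L2 f)"

text \<open>Iterated symmetrised bracket
  \<open>lie_word L x k = [\<dots>[[x 0, x 1]_lie, x 2]_lie, \<dots>, x k]_lie\<close> (k+1 entries).\<close>
fun lie_word :: "('k::field, 'a) lalg \<Rightarrow> (nat \<Rightarrow> 'a) \<Rightarrow> nat \<Rightarrow> 'a" where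
  "lie_word L x 0 = x 0"
| "lie_word L x (Suc k) = lie_br L (lie_word L x k) (x (Suc k))"

definition lie_isoclinism ::
  "('k::field, 'a) lalg \<Rightarrow> ('k, 'b) lalg \<Rightarrow> nat \<Rightarrow> ('a set \<Rightarrow> 'b set) \<Rightarrow> ('a \<Rightarrow> 'b) \<Rightarrow> bool" where
  "lie_isoclinism L1 L2 n \<eta> \<xi> \<longleftrightarrow>
     alg_iso (quot L1 (upper_lie L1 n)) (quot L2 (upper_lie L2 n)) \<eta> \<and>
     alg_iso (restrict_alg L1 (lower_lie L1 (Suc n))) (restrict_alg L2 (lower_lie L2 (Suc n))) \<xi> \<and>
     (\<forall>x y. (\<forall>i\<le>n. x i \<in> lcarrier L1 \<and> y i \<in> lcarrier L2 \<and>
              \<eta> (coset L1 (upper_lie L1 n) (x i)) = coset L2 (upper_lie L2 n) (y i))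
        \<longrightarrow> \<xi> (lie_word L1 x n) = lie_word L2 y n)"

definition lie_isoclinic :: "('k::field, 'a) lalg \<Rightarrow> ('k, 'b) lalg \<Rightarrow> nat \<Rightarrow> bool" where
  "lie_isoclinic L1 L2 n \<longleftrightarrow> (\<exists>\<eta> \<xi>. lie_isoclinism L1 L2 n \<eta> \<xi>)"

end

theory Submission
  imports Defs
begin


locale leib =
  fixes L :: "('k::field, 'a) lalg"
  assumes LA: "leibniz_algebra L"
begin

abbreviation "C \<equiv> lcarrier L"
abbreviation pl (infixl "\<oplus>" 65) where "x \<oplus> y \<equiv> ladd L x y"
abbreviation sm (infixr "\<cdot>" 70) where "c \<cdot> x \<equiv> lsmult L c x"
abbreviation "br x y \<equiv> lbr L x y"
abbreviation "z0 \<equiv> lzero L"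
abbreviation "s x y \<equiv> lie_br L x y"

lemma VS: "vector_space_str L" using LA unfolding leibniz_algebra_def by auto

lemma zero_closed[simp]: "z0 \<in> C" using VS unfolding vector_space_str_def by auto
lemma add_closed[simp]: "x \<in> C \<Longrightarrow> y \<in> C \<Longrightarrow> x \<oplus> y \<in> C" using VS unfolding vector_space_str_def by auto
lemma smult_closed[simp]: "x \<in> C \<Longrightarrow> c \<cdot> x \<in> C" using VS unfolding vector_space_str_def by auto
lemma br_closed[simp]: "x \<in> C \<Longrightarrow> y \<in> C \<Longrightarrow> br x y \<in> C" using LA unfolding leibniz_algebra_def by auto
lemma s_closed[simp]: "x \<in> C \<Longrightarrow> y \<in> C \<Longrightarrow> s x y \<in> C" unfolding lie_br_def by simp
lemma add_assoc: "x \<in> C \<Longrightarrow> y \<in> C \<Longrightarrow> z \<in> C \<Longrightarrow> x \<oplus> y \<oplus> z = x \<oplus> (y \<oplus> z)"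
  using VS unfolding vector_space_str_def by auto
lemma add_comm: "x \<in> C \<Longrightarrow> y \<in> C \<Longrightarrow> x \<oplus> y = y \<oplus> x"
  using VS unfolding vector_space_str_def by auto
lemma add_lcomm: "x \<in> C \<Longrightarrow> y \<in> C \<Longrightarrow> z \<in> C \<Longrightarrow> x \<oplus> (y \<oplus> z) = y \<oplus> (x \<oplus> z)"
  by (metis add_assoc add_comm)
lemmas add_ac = add_assoc add_comm add_lcomm
lemma add_zero[simp]: "x \<in> C \<Longrightarrow> x \<oplus> z0 = x"
  using VS unfolding vector_space_str_def by auto
lemma zero_add[simp]: "x \<in> C \<Longrightarrow> z0 \<oplus> x = x"
  using add_comm add_zero zero_closed by metis
lemma ex_inv: "x \<in> C \<Longrightarrow> \<exists>y\<in>C. x \<oplus> y = z0"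
  using VS unfolding vector_space_str_def by blast
lemma smult_add: "x \<in> C \<Longrightarrow> y \<in> C \<Longrightarrow> c \<cdot> (x \<oplus> y) = c \<cdot> x \<oplus> c \<cdot> y"
  using VS unfolding vector_space_str_def by auto
lemma add_smult: "x \<in> C \<Longrightarrow> (c + d) \<cdot> x = c \<cdot> x \<oplus> d \<cdot> x"
  using VS unfolding vector_space_str_def by auto
lemma smult_smult: "x \<in> C \<Longrightarrow> (c * d) \<cdot> x = c \<cdot> (d \<cdot> x)"
  using VS unfolding vector_space_str_def by auto
lemma one_smult[simp]: "x \<in> C \<Longrightarrow> 1 \<cdot> x = x"
  using VS unfolding vector_space_str_def by auto
lemma bil: "x \<in> C \<Longrightarrow> y \<in> C \<Longrightarrow> z \<in> C \<Longrightarrow>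
     br (c \<cdot> x \<oplus> d \<cdot> y) z = c \<cdot> br x z \<oplus> d \<cdot> br y z \<and> br z (c \<cdot> x \<oplus> d \<cdot> y) = c \<cdot> br z x \<oplus> d \<cdot> br z y"
  using LA unfolding leibniz_algebra_def by auto
lemma leib0: "x \<in> C \<Longrightarrow> y \<in> C \<Longrightarrow> z \<in> C \<Longrightarrow> br x (br y z) = lsub L (br (br x y) z) (br (br x z) y)"
  using LA unfolding leibniz_algebra_def by auto

lemma cancel_left: assumes "a \<in> C" "b \<in> C" "c \<in> C" "a \<oplus> b = a \<oplus> c" shows "b = c"
proof -
  obtain y where y: "y \<in> C" "a \<oplus> y = z0" using ex_inv assms by blast
  have ya: "y \<oplus> a = z0" using y assms add_comm by metis
  have "b = (y \<oplus> a) \<oplus> b" using ya assms by simp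
  also have "\<dots> = y \<oplus> (a \<oplus> c)" using assms y by (simp add: add_assoc)
  also have "\<dots> = c" using assms y ya by (simp add: add_assoc[symmetric])
  finally show ?thesis .
qed
lemma cancel_right: "a \<in> C \<Longrightarrow> b \<in> C \<Longrightarrow> c \<in> C \<Longrightarrow> b \<oplus> a = c \<oplus> a \<Longrightarrow> b = c"
  using cancel_left add_comm by metis
lemma self_add_zero: "a \<in> C \<Longrightarrow> b \<in> C \<Longrightarrow> a \<oplus> b = a \<Longrightarrow> b = z0"
  using cancel_left[of a b z0] by simp

lemma self_add_zero': "a \<in> C \<Longrightarrow> b \<in> C \<Longrightarrow> b \<oplus> a = a \<Longrightarrow> b = z0"
  using self_add_zero add_comm by metis

lemma zero_smult[simp]: "x \<in> C \<Longrightarrow> 0 \<cdot> x = z0"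
  using self_add_zero[of "0 \<cdot> x" "0 \<cdot> x"] add_smult[of x 0 0] by simp
lemma smult_zero[simp]: "c \<cdot> z0 = z0"
  using zero_smult[of z0] smult_smult[of z0 c 0] by simp
lemma neg_r[simp]: "x \<in> C \<Longrightarrow> x \<oplus> (-1) \<cdot> x = z0"
  using add_smult[of x 1 "-1"] by simp
lemma neg_l[simp]: "x \<in> C \<Longrightarrow> (-1) \<cdot> x \<oplus> x = z0"
  using neg_r add_comm by (metis smult_closed)
lemma neg_r2[simp]: "x \<in> C \<Longrightarrow> y \<in> C \<Longrightarrow> x \<oplus> ((-1) \<cdot> x \<oplus> y) = y"
  by (simp add: add_assoc[symmetric])
lemma neg_l2[simp]: "x \<in> C \<Longrightarrow> y \<in> C \<Longrightarrow> (-1) \<cdot> x \<oplus> (x \<oplus> y) = y"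
  by (simp add: add_assoc[symmetric])
lemma lsub_eq: "lsub L x y = x \<oplus> (-1) \<cdot> y" unfolding lsub_def by simp
lemma lsub_closed[simp]: "x \<in> C \<Longrightarrow> y \<in> C \<Longrightarrow> lsub L x y \<in> C" unfolding lsub_def by simp
lemma sub_zero_eq: assumes "x \<in> C" "y \<in> C" "x \<oplus> (-1) \<cdot> y = z0" shows "x = y"
proof -
  have "x = x \<oplus> ((-1) \<cdot> y \<oplus> y)" using assms by simp
  also have "\<dots> = (x \<oplus> (-1) \<cdot> y) \<oplus> y" using assms(1,2) by (simp add: add_assoc)
  also have "\<dots> = y" using assms by simp
  finally show ?thesis .
qed
lemma add_sub: "x \<in> C \<Longrightarrow> y \<in> C \<Longrightarrow> lsub L x y \<oplus> y = x"
  unfolding lsub_def by (simp add: add_assoc)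

lemma br_add_l: "x \<in> C \<Longrightarrow> y \<in> C \<Longrightarrow> z \<in> C \<Longrightarrow> br (x \<oplus> y) z = br x z \<oplus> br y z"
  using bil[of x y z 1 1] by simp
lemma br_add_r: "x \<in> C \<Longrightarrow> y \<in> C \<Longrightarrow> z \<in> C \<Longrightarrow> br z (x \<oplus> y) = br z x \<oplus> br z y"
  using bil[of x y z 1 1] by simp
lemma br_smult_l: "x \<in> C \<Longrightarrow> z \<in> C \<Longrightarrow> br (c \<cdot> x) z = c \<cdot> br x z"
  using bil[of x z0 z c 0] by simp
lemma br_smult_r: "x \<in> C \<Longrightarrow> z \<in> C \<Longrightarrow> br z (c \<cdot> x) = c \<cdot> br z x"
  using bil[of x z0 z c 0] by simp
lemma br_zero_l[simp]: "z \<in> C \<Longrightarrow> br z0 z = z0"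
  using br_smult_l[of z0 z 0] by simp
lemma br_zero_r[simp]: "z \<in> C \<Longrightarrow> br z z0 = z0"
  using br_smult_r[of z0 z 0] by simp

lemma leib: "x \<in> C \<Longrightarrow> y \<in> C \<Longrightarrow> z \<in> C \<Longrightarrow> br x (br y z) \<oplus> br (br x z) y = br (br x y) z"
  using leib0[of x y z] by (simp add: add_sub)

lemma s_def: "s x y = br x y \<oplus> br y x" unfolding lie_br_def by simp
lemma s_comm: "x \<in> C \<Longrightarrow> y \<in> C \<Longrightarrow> s x y = s y x" unfolding lie_br_def by (simp add: add_comm)
lemma s_add_l: "x \<in> C \<Longrightarrow> y \<in> C \<Longrightarrow> z \<in> C \<Longrightarrow> s (x \<oplus> y) z = s x z \<oplus> s y z"
  unfolding lie_br_def by (simp add: br_add_l br_add_r add_ac)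
lemma s_smult_l: "x \<in> C \<Longrightarrow> z \<in> C \<Longrightarrow> s (c \<cdot> x) z = c \<cdot> s x z"
  unfolding lie_br_def by (simp add: br_smult_l br_smult_r smult_add)
lemma s_zero_l[simp]: "z \<in> C \<Longrightarrow> s z0 z = z0" unfolding lie_br_def by simp

lemma I1: assumes "a \<in> C" "b \<in> C" "c \<in> C" shows "br c (s a b) = z0"
proof -
  have e1: "br c (br a b) \<oplus> br (br c b) a = br (br c a) b" using leib assms by auto
  have e2: "br c (br b a) \<oplus> br (br c a) b = br (br c b) a" using leib assms by auto
  have "(br c (br a b) \<oplus> br c (br b a)) \<oplus> (br (br c a) b \<oplus> br (br c b) a)
     = (br c (br a b) \<oplus> br (br c b) a) \<oplus> (br c (br b a) \<oplus> br (br c a) b)"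
    using assms by (simp add: add_ac)
  also have "\<dots> = br (br c a) b \<oplus> br (br c b) a" using e1 e2 by simp
  finally have "(br c (br a b) \<oplus> br c (br b a)) \<oplus> (br (br c a) b \<oplus> br (br c b) a) = br (br c a) b \<oplus> br (br c b) a" .
  then have "br c (br a b) \<oplus> br c (br b a) = z0"
    using assms by (intro self_add_zero'[where a="br (br c a) b \<oplus> br (br c b) a"]) simp_all
  moreover have "br c (br a b \<oplus> br b a) = br c (br a b) \<oplus> br c (br b a)"
    using assms by (intro br_add_r) auto
  ultimately show ?thesis unfolding lie_br_def by metis
qed

end



definition AJ :: "('k::field, 'a) lalg \<Rightarrow> 'a set \<Rightarrow> 'a set" where
  "AJ L J = {m \<in> lcarrier L. \<forall>y\<in>lcarrier L. lie_br L m y \<in> J}"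

definition LAnn :: "('k::field, 'a) lalg \<Rightarrow> 'a set" where
  "LAnn L = {g \<in> lcarrier L. \<forall>x\<in>lcarrier L. lbr L x g = lzero L}"

definition Wd :: "('k::field, 'a) lalg \<Rightarrow> nat \<Rightarrow> 'a set" where
  "Wd L k = {lie_word L x k | x. \<forall>i\<le>k. x i \<in> lcarrier L}"

definition col :: "('k::field, 'a) lalg \<Rightarrow> (nat \<Rightarrow> 'a) \<Rightarrow> nat \<Rightarrow> 'a" where
  "col L x = (\<lambda>i. if i = 0 then lie_br L (x 0) (x 1) else x (Suc i))"

lemma lie_word_cong: "(\<forall>i\<le>k. x i = y i) \<Longrightarrow> lie_word L x k = lie_word L y k"
  by (induction k) auto

lemma lie_word_col: "lie_word L x (Suc k) = lie_word L (col L x) k"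
  by (induction k) (auto simp: col_def)

lemma upper_lie_Suc: "upper_lie L (Suc i) = AJ L (upper_lie L i)"
  unfolding AJ_def by simp

context leib
begin

lemma subspace_C: "subspace L C" unfolding subspace_def by auto
lemma ideal_C: "ideal L C" unfolding ideal_def using subspace_C by auto

lemma subspace_sub: "subspace L J \<Longrightarrow> J \<subseteq> C" unfolding subspace_def by auto
lemma ideal_sub: "ideal L J \<Longrightarrow> J \<subseteq> C" unfolding ideal_def subspace_def by auto
lemma ideal_subspace: "ideal L J \<Longrightarrow> subspace L J" unfolding ideal_def by auto
lemma sp_zero: "subspace L J \<Longrightarrow> z0 \<in> J" unfolding subspace_def by auto
lemma sp_add: "subspace L J \<Longrightarrow> x \<in> J \<Longrightarrow> y \<in> J \<Longrightarrow> x \<oplus> y \<in> J" unfolding subspace_def by auto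
lemma sp_smult: "subspace L J \<Longrightarrow> x \<in> J \<Longrightarrow> c \<cdot> x \<in> J" unfolding subspace_def by auto
lemma id_brl: "ideal L J \<Longrightarrow> x \<in> C \<Longrightarrow> i \<in> J \<Longrightarrow> br x i \<in> J" unfolding ideal_def by auto
lemma id_brr: "ideal L J \<Longrightarrow> x \<in> C \<Longrightarrow> i \<in> J \<Longrightarrow> br i x \<in> J" unfolding ideal_def by auto
lemma id_s: "ideal L J \<Longrightarrow> x \<in> C \<Longrightarrow> i \<in> J \<Longrightarrow> s i x \<in> J"
  unfolding lie_br_def by (meson id_brl id_brr ideal_subspace sp_add)
lemma id_s2: "ideal L J \<Longrightarrow> x \<in> C \<Longrightarrow> i \<in> J \<Longrightarrow> s x i \<in> J"
  unfolding lie_br_def by (meson id_brl id_brr ideal_subspace sp_add)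

lemma sp_cancel: assumes "subspace L J" "u \<in> C" "v \<in> J" "u \<oplus> v \<in> J" shows "u \<in> J"
proof -
  have vC: "v \<in> C" using assms subspace_sub by auto
  have "u = (u \<oplus> v) \<oplus> (-1) \<cdot> v" using assms vC by (simp add: add_assoc)
  then show ?thesis using assms by (metis sp_add sp_smult)
qed

lemma ideal_Inter: assumes F: "F \<noteq> {}" "\<forall>I\<in>F. ideal L I" shows "ideal L (\<Inter>F)"
proof -
  obtain I0 where I0: "I0 \<in> F" using F by auto
  have a: "\<Inter>F \<subseteq> C" using I0 F(2) ideal_sub by blast
  have b: "z0 \<in> \<Inter>F"
  proof
    fix I assume "I \<in> F" then show "z0 \<in> I" using F(2) by (simp add: ideal_subspace sp_zero)
  qed
  have c: "x \<oplus> y \<in> \<Inter>F" if "x \<in> \<Inter>F" "y \<in> \<Inter>F" for x y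
  proof
    fix I assume I: "I \<in> F"
    then have "x \<in> I" "y \<in> I" "ideal L I" using that F(2) by auto
    then show "x \<oplus> y \<in> I" by (simp add: ideal_subspace sp_add)
  qed
  have d: "c \<cdot> x \<in> \<Inter>F" if "x \<in> \<Inter>F" for x c
  proof
    fix I assume I: "I \<in> F"
    then have "x \<in> I" "ideal L I" using that F(2) by auto
    then show "c \<cdot> x \<in> I" by (simp add: ideal_subspace sp_smult)
  qed
  have e1: "br x i \<in> \<Inter>F" if "x \<in> C" "i \<in> \<Inter>F" for x i
  proof
    fix I assume I: "I \<in> F"
    then have "i \<in> I" "ideal L I" using that F(2) by auto
    then show "br x i \<in> I" using that by (simp add: id_brl)
  qed
  have e2: "br i x \<in> \<Inter>F" if "x \<in> C" "i \<in> \<Inter>F" for x i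
  proof
    fix I assume I: "I \<in> F"
    then have "i \<in> I" "ideal L I" using that F(2) by auto
    then show "br i x \<in> I" using that by (simp add: id_brr)
  qed
  show ?thesis unfolding ideal_def subspace_def
    by (intro conjI ballI allI a b c d e1 e2)
qed

lemma ideal_gen_ideal: assumes "X \<subseteq> C" shows "ideal L (ideal_gen L X)"
  unfolding ideal_gen_def using assms ideal_C by (intro ideal_Inter) auto

lemma ideal_gen_sub: "X \<subseteq> ideal_gen L X" unfolding ideal_gen_def by auto
lemma ideal_gen_least: "ideal L J \<Longrightarrow> X \<subseteq> J \<Longrightarrow> ideal_gen L X \<subseteq> J"
  unfolding ideal_gen_def by auto

lemma I2: assumes "z \<in> C" "m \<in> C" "y \<in> C"
  shows "s (br z m) y \<oplus> br (s m y) z = br (s m z) y \<oplus> s m (br y z)"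
proof -
  have L1: "br y (br z m) \<oplus> br (br y m) z = br (br y z) m" using leib assms by auto
  have L2: "br m (br y z) \<oplus> br (br m z) y = br (br m y) z" using leib assms by auto
  have "s (br z m) y \<oplus> br (s m y) z =
     (br (br z m) y \<oplus> br y (br z m)) \<oplus> (br (br m y) z \<oplus> br (br y m) z)"
    using assms by (simp add: s_def br_add_l)
  also have "\<dots> = br (br z m) y \<oplus> (br y (br z m) \<oplus> br (br y m) z) \<oplus> br (br m y) z"
    using assms by (simp add: add_ac)
  also have "\<dots> = br (br z m) y \<oplus> br (br y z) m \<oplus> br (br m y) z" using L1 by simp
  also have "\<dots> = br (br z m) y \<oplus> (br m (br y z) \<oplus> br (br m z) y) \<oplus> br (br y z) m"
    using assms L2 by (simp add: add_ac)
  also have "\<dots> = br (s m z) y \<oplus> s m (br y z)"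
    using assms by (simp add: s_def br_add_l add_ac)
  finally show ?thesis .
qed

lemma AJ_ideal: assumes J: "ideal L J" shows "ideal L (AJ L J)"
proof -
  have JS: "subspace L J" using J ideal_subspace by auto
  have JC: "J \<subseteq> C" using J ideal_sub by auto
  have sp: "subspace L (AJ L J)"
  proof -
    have a: "AJ L J \<subseteq> C" unfolding AJ_def by auto
    have b: "z0 \<in> AJ L J" unfolding AJ_def using JS by (simp add: sp_zero)
    have c: "x \<oplus> y \<in> AJ L J" if x: "x \<in> AJ L J" and y: "y \<in> AJ L J" for x y
    proof -
      have "x \<in> C" "y \<in> C" "\<forall>w\<in>C. s x w \<in> J" "\<forall>w\<in>C. s y w \<in> J" using x y unfolding AJ_def by auto
      then show ?thesis unfolding AJ_def using JS by (simp add: s_add_l sp_add)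
    qed
    have d: "c \<cdot> x \<in> AJ L J" if x: "x \<in> AJ L J" for x c
    proof -
      have "x \<in> C" "\<forall>w\<in>C. s x w \<in> J" using x unfolding AJ_def by auto
      then show ?thesis unfolding AJ_def using JS by (simp add: s_smult_l sp_smult)
    qed
    show ?thesis unfolding subspace_def by (intro conjI ballI allI a b c d)
  qed
  have l: "br z m \<in> AJ L J" if z: "z \<in> C" and m: "m \<in> AJ L J" for z m
  proof -
    have mC: "m \<in> C" and mJ: "\<And>y. y \<in> C \<Longrightarrow> s m y \<in> J" using m unfolding AJ_def by auto
    have "s (br z m) y \<in> J" if y: "y \<in> C" for y
    proof (rule sp_cancel[OF JS])
      show "s (br z m) y \<in> C" using z mC y by simp
      show "br (s m y) z \<in> J" using id_brr[OF J z mJ[OF y]] .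
      show "s (br z m) y \<oplus> br (s m y) z \<in> J" unfolding I2[OF z mC y]
        using J JS mJ y z mC by (intro sp_add id_brr) auto
    qed
    then show ?thesis unfolding AJ_def using z mC by auto
  qed
  have r: "br m z \<in> AJ L J" if z: "z \<in> C" and m: "m \<in> AJ L J" for z m
  proof -
    have mC: "m \<in> C" and mJ: "\<And>y. y \<in> C \<Longrightarrow> s m y \<in> J" using m unfolding AJ_def by auto
    have zm: "\<And>y. y \<in> C \<Longrightarrow> s (br z m) y \<in> J" using l[OF z m] unfolding AJ_def by auto
    have "s (br m z) y \<in> J" if y: "y \<in> C" for y
    proof (rule sp_cancel[OF JS])
      show "s (br m z) y \<in> C" using z mC y by simp
      show "s (br z m) y \<in> J" using zm y by auto
      have e: "s m z = br m z \<oplus> br z m" by (rule s_def)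
      have "s (s m z) y = s (br m z) y \<oplus> s (br z m) y" unfolding e using z mC y by (intro s_add_l) auto
      then have "s (br m z) y \<oplus> s (br z m) y = s (s m z) y" by simp
      then show "s (br m z) y \<oplus> s (br z m) y \<in> J" using id_s[OF J y mJ[OF z]] by simp
    qed
    then show ?thesis unfolding AJ_def using z mC by auto
  qed
  show ?thesis unfolding ideal_def by (intro conjI ballI sp l r)
qed

lemma upper_lie_ideal: "ideal L (upper_lie L i)"
proof (induction i)
  case 0
  show ?case unfolding ideal_def subspace_def by auto
next
  case (Suc i)
  then show ?case unfolding upper_lie_Suc by (rule AJ_ideal)
qed

lemma upper_lie_C: "upper_lie L i \<subseteq> C" using upper_lie_ideal ideal_sub by auto

lemma lower_lie_ideal: "ideal L (lower_lie L (Suc i))"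
proof (induction i)
  case 0 then show ?case using ideal_C by simp
next
  case (Suc i)
  have "{lie_br L m x | m x. m \<in> lower_lie L (Suc i) \<and> x \<in> C} \<subseteq> C"
    using ideal_sub[OF Suc.IH] by auto
  then show ?case by (simp add: lie_comm_def ideal_gen_ideal)
qed

lemma lower_lie_C: "lower_lie L (Suc i) \<subseteq> C" using lower_lie_ideal ideal_sub by auto

lemma lower_gen: assumes "m \<in> lower_lie L (Suc i)" "x \<in> C" shows "s m x \<in> lower_lie L (Suc (Suc i))"
proof -
  have "s m x \<in> {lie_br L m x | m x. m \<in> lower_lie L (Suc i) \<and> x \<in> C}" using assms by blast
  then show ?thesis unfolding lower_lie.simps lie_comm_def using ideal_gen_sub by (rule subsetD[rotated])
qed

lemma lower_dec: "lower_lie L (Suc (Suc i)) \<subseteq> lower_lie L (Suc i)"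
  unfolding lower_lie.simps lie_comm_def
proof (rule ideal_gen_least[OF lower_lie_ideal])
  show "{lie_br L m x | m x. m \<in> lower_lie L (Suc i) \<and> x \<in> C} \<subseteq> lower_lie L (Suc i)"
  proof
    fix w assume "w \<in> {lie_br L m x | m x. m \<in> lower_lie L (Suc i) \<and> x \<in> C}"
    then obtain m x where "w = s m x" "m \<in> lower_lie L (Suc i)" "x \<in> C" by blast
    then show "w \<in> lower_lie L (Suc i)" using id_s[OF lower_lie_ideal] by simp
  qed
qed

lemma lower_mono: "i \<le> j \<Longrightarrow> lower_lie L (Suc j) \<subseteq> lower_lie L (Suc i)"
proof (induction j)
  case 0 then show ?case by simp
next
  case (Suc j)
  show ?case
  proof (cases "i \<le> j")
    case True
    then show ?thesis using Suc.IH lower_dec[of j] by (rule_tac subset_trans) auto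
  next
    case False
    then have "i = Suc j" using Suc.prems by simp
    then show ?thesis by simp
  qed
qed

lemma LAnn_ideal: "ideal L (LAnn L)"
proof -
  have sp: "subspace L (LAnn L)"
  proof -
    have a: "LAnn L \<subseteq> C" unfolding LAnn_def by auto
    have b: "z0 \<in> LAnn L" unfolding LAnn_def by simp
    have c: "x \<oplus> y \<in> LAnn L" if x: "x \<in> LAnn L" and y: "y \<in> LAnn L" for x y
    proof -
      have "x \<in> C" "y \<in> C" "\<forall>w\<in>C. br w x = z0" "\<forall>w\<in>C. br w y = z0" using x y unfolding LAnn_def by auto
      then show ?thesis unfolding LAnn_def by (simp add: br_add_r)
    qed
    have d: "c \<cdot> x \<in> LAnn L" if x: "x \<in> LAnn L" for x c
    proof -
      have "x \<in> C" "\<forall>w\<in>C. br w x = z0" using x unfolding LAnn_def by auto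
      then show ?thesis unfolding LAnn_def by (simp add: br_smult_r)
    qed
    show ?thesis unfolding subspace_def by (intro conjI ballI allI a b c d)
  qed
  have l: "br z g \<in> LAnn L" if zC: "z \<in> C" and "g \<in> LAnn L" for z g
  proof -
    have g: "g \<in> C" "\<And>x. x \<in> C \<Longrightarrow> br x g = z0" using that unfolding LAnn_def by auto
    have "br x (br z g) = z0" if x: "x \<in> C" for x
    proof -
      have "br x (br z g) \<oplus> br (br x g) z = br (br x z) g" using leib[OF x zC g(1)] .
      then show ?thesis using g x zC by simp
    qed
    then show ?thesis unfolding LAnn_def using zC g by auto
  qed
  have r: "br g z \<in> LAnn L" if zC: "z \<in> C" and "g \<in> LAnn L" for z g
  proof -
    have g: "g \<in> C" "\<And>x. x \<in> C \<Longrightarrow> br x g = z0" using that unfolding LAnn_def by auto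
    have "br x (br g z) = z0" if x: "x \<in> C" for x
    proof -
      have "br x (br g z) \<oplus> br (br x z) g = br (br x g) z" using leib[OF x g(1) zC] .
      then show ?thesis using g x zC by simp
    qed
    then show ?thesis unfolding LAnn_def using zC g by auto
  qed
  show ?thesis unfolding ideal_def by (intro conjI ballI sp l r)
qed

lemma lower2_LAnn: "lower_lie L (Suc (Suc 0)) \<subseteq> LAnn L"
  unfolding lower_lie.simps lie_comm_def
proof (rule ideal_gen_least[OF LAnn_ideal])
  show "{lie_br L m x | m x. m \<in> C \<and> x \<in> C} \<subseteq> LAnn L"
  proof
    fix w assume "w \<in> {lie_br L m x | m x. m \<in> C \<and> x \<in> C}"
    then obtain m x where w: "w = s m x" "m \<in> C" "x \<in> C" by auto
    then show "w \<in> LAnn L" unfolding LAnn_def by (simp add: I1)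
  qed
qed

lemma left_zero: assumes "0 < n" "g \<in> lower_lie L (Suc n)" "x \<in> C" shows "br x g = z0"
proof -
  have "g \<in> lower_lie L (Suc 1)" using lower_mono[of 1 n] assms by auto
  then have "g \<in> LAnn L" using lower2_LAnn by auto
  then show ?thesis using assms(3) unfolding LAnn_def by auto
qed

lemma lw_closed: "(\<forall>i\<le>k. x i \<in> C) \<Longrightarrow> lie_word L x k \<in> C"
  by (induction k) auto

lemma lw_lower: "(\<forall>i\<le>k. x i \<in> C) \<Longrightarrow> lie_word L x k \<in> lower_lie L (Suc k)"
proof (induction k)
  case 0 then show ?case by simp
next
  case (Suc k) then show ?case using lower_gen by simp
qed

lemma lower_Wd: "lower_lie L (Suc k) \<subseteq> ideal_gen L (Wd L k)"
proof (induction k)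
  case 0
  have "C \<subseteq> Wd L 0" unfolding Wd_def by (auto intro!: exI[of _ "\<lambda>_. _"])
  then show ?case using ideal_gen_sub by fastforce
next
  case (Suc k)
  have WC: "Wd L j \<subseteq> C" for j unfolding Wd_def using lw_closed by auto
  let ?J = "ideal_gen L (Wd L (Suc k))"
  have J: "ideal L ?J" using ideal_gen_ideal[OF WC] .
  have "Wd L k \<subseteq> AJ L ?J"
  proof
    fix w assume "w \<in> Wd L k"
    then obtain x where x: "\<forall>i\<le>k. x i \<in> C" "w = lie_word L x k" unfolding Wd_def by auto
    have "s w y \<in> ?J" if y: "y \<in> C" for y
    proof -
      have "s w y = lie_word L (x(Suc k := y)) (Suc k)"
        using x lie_word_cong[of k x "x(Suc k := y)" L] by simp
      moreover have "lie_word L (x(Suc k := y)) (Suc k) \<in> Wd L (Suc k)"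
        unfolding Wd_def using x y by (auto intro!: exI[of _ "x(Suc k := y)"])
      ultimately show ?thesis using ideal_gen_sub by auto
    qed
    then show "w \<in> AJ L ?J" unfolding AJ_def using x lw_closed by auto
  qed
  then have "ideal_gen L (Wd L k) \<subseteq> AJ L ?J" by (rule ideal_gen_least[OF AJ_ideal[OF J]])
  then have "lower_lie L (Suc k) \<subseteq> AJ L ?J" using Suc by auto
  then show ?case unfolding lower_lie.simps lie_comm_def
    by (intro ideal_gen_least[OF J]) (auto simp: AJ_def)
qed

lemma lw_upd_Suc: "lie_word L (z(0 := x)) (Suc k) = lie_br L (lie_word L (z(0 := x)) k) (z (Suc k))"
  by simp

lemma lw_closed0: "(\<forall>i. 0 < i \<and> i \<le> k \<longrightarrow> z i \<in> C) \<Longrightarrow> a \<in> C \<Longrightarrow> lie_word L (z(0 := a)) k \<in> C"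
  by (rule lw_closed) auto

lemma lw_add: assumes "\<forall>i. 0 < i \<and> i \<le> k \<longrightarrow> z i \<in> C" "a \<in> C" "b \<in> C"
  shows "lie_word L (z(0 := a \<oplus> b)) k = lie_word L (z(0 := a)) k \<oplus> lie_word L (z(0 := b)) k"
  using assms
proof (induction k)
  case 0 then show ?case by simp
next
  case (Suc k)
  have p: "\<forall>i. 0 < i \<and> i \<le> k \<longrightarrow> z i \<in> C" using Suc.prems by auto
  have wa: "lie_word L (z(0 := a)) k \<in> C" using lw_closed0[OF p Suc.prems(2)] .
  have wb: "lie_word L (z(0 := b)) k \<in> C" using lw_closed0[OF p Suc.prems(3)] .
  have zs: "z (Suc k) \<in> C" using Suc.prems by auto
  have IH: "lie_word L (z(0 := a \<oplus> b)) k = lie_word L (z(0 := a)) k \<oplus> lie_word L (z(0 := b)) k"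
    using Suc.IH[OF p Suc.prems(2,3)] .
  show ?case unfolding lw_upd_Suc IH using s_add_l[OF wa wb zs] .
qed

lemma lw_smult: assumes "\<forall>i. 0 < i \<and> i \<le> k \<longrightarrow> z i \<in> C" "a \<in> C"
  shows "lie_word L (z(0 := c \<cdot> a)) k = c \<cdot> lie_word L (z(0 := a)) k"
  using assms
proof (induction k)
  case 0 then show ?case by simp
next
  case (Suc k)
  have p: "\<forall>i. 0 < i \<and> i \<le> k \<longrightarrow> z i \<in> C" using Suc.prems by auto
  have wa: "lie_word L (z(0 := a)) k \<in> C" using lw_closed0[OF p Suc.prems(2)] .
  have zs: "z (Suc k) \<in> C" using Suc.prems by auto
  have IH: "lie_word L (z(0 := c \<cdot> a)) k = c \<cdot> lie_word L (z(0 := a)) k"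
    using Suc.IH[OF p Suc.prems(2)] .
  show ?case unfolding lw_upd_Suc IH using s_smult_l[OF wa zs] .
qed

lemma lw_zero: assumes "\<forall>i. 0 < i \<and> i \<le> k \<longrightarrow> z i \<in> C"
  shows "lie_word L (z(0 := z0)) k = z0"
  using assms by (induction k) auto

end


lemma hom_closed: "alg_hom A B f \<Longrightarrow> x \<in> lcarrier A \<Longrightarrow> f x \<in> lcarrier B"
  unfolding alg_hom_def by auto
lemma hom_add: "alg_hom A B f \<Longrightarrow> x \<in> lcarrier A \<Longrightarrow> y \<in> lcarrier A \<Longrightarrow> f (ladd A x y) = ladd B (f x) (f y)"
  unfolding alg_hom_def by auto
lemma hom_br: "alg_hom A B f \<Longrightarrow> x \<in> lcarrier A \<Longrightarrow> y \<in> lcarrier A \<Longrightarrow> f (lbr A x y) = lbr B (f x) (f y)"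
  unfolding alg_hom_def by auto
lemma hom_smult: "alg_hom A B f \<Longrightarrow> x \<in> lcarrier A \<Longrightarrow> f (lsmult A c x) = lsmult B c (f x)"
  unfolding alg_hom_def by auto
lemma hom_zero: assumes "leib A" "leib B" "alg_hom A B f" shows "f (lzero A) = lzero B"
proof -
  have "f (lzero A) = f (lsmult A 0 (lzero A))" using leib.zero_smult[OF assms(1)] leib.zero_closed[OF assms(1)] by simp
  also have "\<dots> = lsmult B 0 (f (lzero A))" using hom_smult[OF assms(3)] leib.zero_closed[OF assms(1)] by simp
  also have "\<dots> = lzero B" using leib.zero_smult[OF assms(2)] hom_closed[OF assms(3)] leib.zero_closed[OF assms(1)] by simp
  finally show ?thesis .
qed

lemma hom_s': assumes "leib A" "alg_hom A B f" "x \<in> lcarrier A" "y \<in> lcarrier A"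
  shows "f (lie_br A x y) = lie_br B (f x) (f y)"
  using assms(2-4) leib.br_closed[OF assms(1)] unfolding lie_br_def by (simp add: hom_add hom_br)

lemma hom_lw: assumes "leib A" "alg_hom A B f" "\<forall>i\<le>k. x i \<in> lcarrier A"
  shows "f (lie_word A x k) = lie_word B (\<lambda>i. f (x i)) k"
  using assms(3)
proof (induction k)
  case 0 then show ?case by simp
next
  case (Suc k)
  have "lie_word A x k \<in> lcarrier A" using leib.lw_closed[OF assms(1)] Suc.prems by auto
  then show ?case using Suc hom_s'[OF assms(1,2)] by simp
qed

lemma ball_img: "f ` S = T \<Longrightarrow> (\<forall>x\<in>T. P x) = (\<forall>a\<in>S. P (f a))" by auto

lemma img_leib:
  assumes A: "leib A" and h: "alg_hom A B f" and s: "f ` lcarrier A = lcarrier B"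
    and z: "f (lzero A) = lzero B"
  shows "leib B"
proof -
  note cl = leib.add_closed[OF A] leib.smult_closed[OF A] leib.br_closed[OF A] leib.zero_closed[OF A]
  have ha: "\<And>x y. x \<in> lcarrier A \<Longrightarrow> y \<in> lcarrier A \<Longrightarrow> ladd B (f x) (f y) = f (ladd A x y)"
    using hom_add[OF h] by simp
  have hs: "\<And>x c. x \<in> lcarrier A \<Longrightarrow> lsmult B c (f x) = f (lsmult A c x)"
    using hom_smult[OF h] by simp
  have hb: "\<And>x y. x \<in> lcarrier A \<Longrightarrow> y \<in> lcarrier A \<Longrightarrow> lbr B (f x) (f y) = f (lbr A x y)"
    using hom_br[OF h] by simp
  have hc: "\<And>x. x \<in> lcarrier A \<Longrightarrow> f x \<in> lcarrier B" using hom_closed[OF h] .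
  have v1: "lzero B \<in> lcarrier B" using z s leib.zero_closed[OF A] by force
  have v2: "\<forall>x\<in>lcarrier B. \<forall>y\<in>lcarrier B. ladd B x y \<in> lcarrier B"
    unfolding ball_img[OF s] using ha hc cl by simp
  have v3: "\<forall>c. \<forall>x\<in>lcarrier B. lsmult B c x \<in> lcarrier B"
    unfolding ball_img[OF s] using hs hc cl by simp
  have v4: "\<forall>x\<in>lcarrier B. \<forall>y\<in>lcarrier B. \<forall>z\<in>lcarrier B. ladd B (ladd B x y) z = ladd B x (ladd B y z)"
    unfolding ball_img[OF s] using ha cl leib.add_assoc[OF A] by simp
  have v5: "\<forall>x\<in>lcarrier B. \<forall>y\<in>lcarrier B. ladd B x y = ladd B y x"
    unfolding ball_img[OF s] using ha cl leib.add_comm[OF A] by simp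
  have v6: "\<forall>x\<in>lcarrier B. ladd B x (lzero B) = x"
    unfolding ball_img[OF s] using ha cl z[symmetric] leib.add_zero[OF A] by simp
  have v7: "\<forall>x\<in>lcarrier B. \<exists>y\<in>lcarrier B. ladd B x y = lzero B"
    unfolding ball_img[OF s]
  proof
    fix a assume a: "a \<in> lcarrier A"
    then have "ladd B (f a) (f (lsmult A (-1) a)) = lzero B" using ha cl z leib.neg_r[OF A] by simp
    then show "\<exists>y\<in>lcarrier B. ladd B (f a) y = lzero B" using hc cl a by blast
  qed
  have v8: "\<forall>c. \<forall>x\<in>lcarrier B. \<forall>y\<in>lcarrier B. lsmult B c (ladd B x y) = ladd B (lsmult B c x) (lsmult B c y)"
    unfolding ball_img[OF s] using ha hs cl leib.smult_add[OF A] by simp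
  have v9: "\<forall>c d. \<forall>x\<in>lcarrier B. lsmult B (c + d) x = ladd B (lsmult B c x) (lsmult B d x)"
    unfolding ball_img[OF s] using ha hs cl leib.add_smult[OF A] by simp
  have v10: "\<forall>c d. \<forall>x\<in>lcarrier B. lsmult B (c * d) x = lsmult B c (lsmult B d x)"
    unfolding ball_img[OF s] using hs cl leib.smult_smult[OF A] by simp
  have v11: "\<forall>x\<in>lcarrier B. lsmult B 1 x = x"
    unfolding ball_img[OF s] using hs cl leib.one_smult[OF A] by simp
  have l1: "\<forall>x\<in>lcarrier B. \<forall>y\<in>lcarrier B. lbr B x y \<in> lcarrier B"
    unfolding ball_img[OF s] using hb hc cl by simp
  have l2: "\<forall>c d. \<forall>x\<in>lcarrier B. \<forall>y\<in>lcarrier B. \<forall>z\<in>lcarrier B.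
        lbr B (ladd B (lsmult B c x) (lsmult B d y)) z
          = ladd B (lsmult B c (lbr B x z)) (lsmult B d (lbr B y z)) \<and>
        lbr B z (ladd B (lsmult B c x) (lsmult B d y))
          = ladd B (lsmult B c (lbr B z x)) (lsmult B d (lbr B z y))"
    unfolding ball_img[OF s] using ha hs hb cl leib.bil[OF A] by simp
  have l3: "\<forall>x\<in>lcarrier B. \<forall>y\<in>lcarrier B. \<forall>z\<in>lcarrier B.
        lbr B x (lbr B y z) = lsub B (lbr B (lbr B x y) z) (lbr B (lbr B x z) y)"
    unfolding ball_img[OF s] lsub_def using ha hs hb cl leib.leib0[OF A] unfolding lsub_def by simp
  show ?thesis unfolding leib_def leibniz_algebra_def vector_space_str_def
    using v1 v2 v3 v4 v5 v6 v7 v8 v9 v10 v11 l1 l2 l3 by blast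
qed

lemma leib_intro:
  assumes v1: "lzero L \<in> lcarrier L"
  and v2: "\<And>x y. x \<in> lcarrier L \<Longrightarrow> y \<in> lcarrier L \<Longrightarrow> ladd L x y \<in> lcarrier L"
  and v3: "\<And>c x. x \<in> lcarrier L \<Longrightarrow> lsmult L c x \<in> lcarrier L"
  and v4: "\<And>x y z. x \<in> lcarrier L \<Longrightarrow> y \<in> lcarrier L \<Longrightarrow> z \<in> lcarrier L \<Longrightarrow> ladd L (ladd L x y) z = ladd L x (ladd L y z)"
  and v5: "\<And>x y. x \<in> lcarrier L \<Longrightarrow> y \<in> lcarrier L \<Longrightarrow> ladd L x y = ladd L y x"
  and v6: "\<And>x. x \<in> lcarrier L \<Longrightarrow> ladd L x (lzero L) = x"
  and v7: "\<And>x. x \<in> lcarrier L \<Longrightarrow> \<exists>y\<in>lcarrier L. ladd L x y = lzero L"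
  and v8: "\<And>c x y. x \<in> lcarrier L \<Longrightarrow> y \<in> lcarrier L \<Longrightarrow> lsmult L c (ladd L x y) = ladd L (lsmult L c x) (lsmult L c y)"
  and v9: "\<And>c d x. x \<in> lcarrier L \<Longrightarrow> lsmult L (c + d) x = ladd L (lsmult L c x) (lsmult L d x)"
  and v10: "\<And>c d x. x \<in> lcarrier L \<Longrightarrow> lsmult L (c * d) x = lsmult L c (lsmult L d x)"
  and v11: "\<And>x. x \<in> lcarrier L \<Longrightarrow> lsmult L 1 x = x"
  and l1: "\<And>x y. x \<in> lcarrier L \<Longrightarrow> y \<in> lcarrier L \<Longrightarrow> lbr L x y \<in> lcarrier L"
  and l2: "\<And>c d x y z. x \<in> lcarrier L \<Longrightarrow> y \<in> lcarrier L \<Longrightarrow> z \<in> lcarrier L \<Longrightarrow>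
        lbr L (ladd L (lsmult L c x) (lsmult L d y)) z
          = ladd L (lsmult L c (lbr L x z)) (lsmult L d (lbr L y z))"
  and l2': "\<And>c d x y z. x \<in> lcarrier L \<Longrightarrow> y \<in> lcarrier L \<Longrightarrow> z \<in> lcarrier L \<Longrightarrow>
        lbr L z (ladd L (lsmult L c x) (lsmult L d y))
          = ladd L (lsmult L c (lbr L z x)) (lsmult L d (lbr L z y))"
  and l3: "\<And>x y z. x \<in> lcarrier L \<Longrightarrow> y \<in> lcarrier L \<Longrightarrow> z \<in> lcarrier L \<Longrightarrow>
        lbr L x (lbr L y z) = ladd L (lbr L (lbr L x y) z) (lsmult L (-1) (lbr L (lbr L x z) y))"
  shows "leib L"
  unfolding leib_def leibniz_algebra_def vector_space_str_def lsub_def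
  by (intro conjI ballI allI) (simp_all add: v1 v2 v3 v4 v6 v7 v8 v9 v10 v11 l1 l2 l2' l3, simp add: v5)


lemma restrict_simps[simp]:
  "lcarrier (restrict_alg L S) = S" "ladd (restrict_alg L S) = ladd L" "lzero (restrict_alg L S) = lzero L"
  "lsmult (restrict_alg L S) = lsmult L" "lbr (restrict_alg L S) = lbr L"
  unfolding restrict_alg_def by simp_all

lemma restrict_lie_br[simp]: "lie_br (restrict_alg L S) = lie_br L"
  unfolding lie_br_def[abs_def] by simp

lemma restrict_lie_word[simp]: "lie_word (restrict_alg L S) x k = lie_word L x k"
  by (induction k) simp_all

lemma sub_leib: assumes A: "leib L" and S: "subalgebra L S" shows "leib (restrict_alg L S)"
proof -
  have S1: "S \<subseteq> lcarrier L" "lzero L \<in> S" "\<And>x y. x\<in>S \<Longrightarrow> y\<in>S \<Longrightarrow> ladd L x y \<in> S"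
    "\<And>c x. x\<in>S \<Longrightarrow> lsmult L c x \<in> S"
    "\<And>x y. x\<in>S \<Longrightarrow> y\<in>S \<Longrightarrow> lbr L x y \<in> S" using S unfolding subalgebra_def subspace_def by auto
  have sub: "\<And>x. x \<in> S \<Longrightarrow> x \<in> lcarrier L" using S1 by auto
  show ?thesis
    apply (rule leib_intro; unfold restrict_simps)
    subgoal by (rule S1(2))
    subgoal by (rule S1(3))
    subgoal by (rule S1(4))
    subgoal by (intro leib.add_assoc[OF A] sub)
    subgoal by (intro leib.add_comm[OF A] sub)
    subgoal by (intro leib.add_zero[OF A] sub)
    subgoal for x
    proof -
      assume x: "x \<in> S"
      then have "ladd L x (lsmult L (-1) x) = lzero L" using leib.neg_r[OF A] sub by auto
      then show "\<exists>y\<in>S. ladd L x y = lzero L" using x S1 by blast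
    qed
    subgoal by (intro leib.smult_add[OF A] sub)
    subgoal by (intro leib.add_smult[OF A] sub)
    subgoal by (intro leib.smult_smult[OF A] sub)
    subgoal by (intro leib.one_smult[OF A] sub)
    subgoal by (rule S1(5))
    subgoal using leib.bil[OF A] sub by blast
    subgoal using leib.bil[OF A] sub by blast
    subgoal using leib.leib0[OF A, unfolded lsub_def] sub by blast
    done
qed

lemma dsum_simps[simp]:
  "lcarrier (dsum A B) = lcarrier A \<times> lcarrier B"
  "ladd (dsum A B) (a, b) (c, d) = (ladd A a c, ladd B b d)"
  "lzero (dsum A B) = (lzero A, lzero B)"
  "lsmult (dsum A B) k (a, b) = (lsmult A k a, lsmult B k b)"
  "lbr (dsum A B) (a, b) (c, d) = (lbr A a c, lbr B b d)"
  unfolding dsum_def by simp_all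

lemma dsum_lie_br[simp]: "lie_br (dsum A B) (a, b) (c, d) = (lie_br A a c, lie_br B b d)"
  unfolding lie_br_def by simp

lemma dsum_lie_word: "lie_word (dsum A B) x k = (lie_word A (\<lambda>i. fst (x i)) k, lie_word B (\<lambda>i. snd (x i)) k)"
proof (induction k)
  case 0 then show ?case by simp
next
  case (Suc k)
  then show ?case by (cases "x (Suc k)") simp
qed

lemma dsum_leib: assumes A: "leib A" and B: "leib B" shows "leib (dsum A B)"
  apply (rule leib_intro; unfold dsum_simps(1))
  subgoal using leib.zero_closed[OF A] leib.zero_closed[OF B] by simp
  subgoal for x y by (cases x; cases y) (simp add: leib.add_closed[OF A] leib.add_closed[OF B])
  subgoal for c x by (cases x) (simp add: leib.smult_closed[OF A] leib.smult_closed[OF B])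
  subgoal for x y z by (cases x; cases y; cases z) (simp add: leib.add_assoc[OF A] leib.add_assoc[OF B])
  subgoal for x y by (cases x; cases y) (simp add: leib.add_comm[OF A] leib.add_comm[OF B])
  subgoal for x by (cases x) (simp add: leib.add_zero[OF A] leib.add_zero[OF B])
  subgoal for x
  proof -
    assume "x \<in> lcarrier A \<times> lcarrier B"
    then obtain a b where x: "x = (a, b)" "a \<in> lcarrier A" "b \<in> lcarrier B" by auto
    then have "ladd (dsum A B) x (lsmult A (-1) a, lsmult B (-1) b) = lzero (dsum A B)"
      using leib.neg_r[OF A] leib.neg_r[OF B] by simp
    then show "\<exists>y\<in>lcarrier A \<times> lcarrier B. ladd (dsum A B) x y = lzero (dsum A B)"
      using x leib.smult_closed[OF A] leib.smult_closed[OF B] by (intro bexI[of _ "(lsmult A (-1) a, lsmult B (-1) b)"]) auto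
  qed
  subgoal for c x y by (cases x; cases y) (simp add: leib.smult_add[OF A] leib.smult_add[OF B])
  subgoal for c d x by (cases x) (simp add: leib.add_smult[OF A] leib.add_smult[OF B])
  subgoal for c d x by (cases x) (simp add: leib.smult_smult[OF A] leib.smult_smult[OF B])
  subgoal for x by (cases x) (simp add: leib.one_smult[OF A] leib.one_smult[OF B])
  subgoal for x y by (cases x; cases y) (simp add: leib.br_closed[OF A] leib.br_closed[OF B])
  subgoal for c d x y z by (cases x; cases y; cases z) (simp add: leib.bil[OF A] leib.bil[OF B])
  subgoal for c d x y z by (cases x; cases y; cases z) (simp add: leib.bil[OF A] leib.bil[OF B])
  subgoal for x y z by (cases x; cases y; cases z) (simp add: leib.leib0[OF A, unfolded lsub_def] leib.leib0[OF B, unfolded lsub_def])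
  done



context leib
begin

lemma ideal_I:
  assumes "J \<subseteq> C" "z0 \<in> J" "\<And>x y. x\<in>J \<Longrightarrow> y\<in>J \<Longrightarrow> x \<oplus> y \<in> J" "\<And>c x. x\<in>J \<Longrightarrow> c \<cdot> x \<in> J"
    "\<And>x i. x\<in>C \<Longrightarrow> i\<in>J \<Longrightarrow> br x i \<in> J" "\<And>x i. x\<in>C \<Longrightarrow> i\<in>J \<Longrightarrow> br i x \<in> J"
  shows "ideal L J"
  unfolding ideal_def subspace_def by (intro conjI ballI allI assms) 

lemma coset_memD: "a \<in> coset L I x \<Longrightarrow> \<exists>i\<in>I. a = x \<oplus> i" unfolding coset_def by auto
lemma coset_memI: "i \<in> I \<Longrightarrow> x \<oplus> i \<in> coset L I x" unfolding coset_def by auto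

lemma coset_C: assumes "ideal L I" "x \<in> C" shows "coset L I x \<subseteq> C"
  using assms ideal_sub[OF assms(1)] unfolding coset_def by auto

lemma coset_self: assumes "ideal L I" "x \<in> C" shows "x \<in> coset L I x"
  using coset_memI[of z0 I x] assms sp_zero[OF ideal_subspace] by simp

lemma coset_eq: assumes I: "ideal L I" and x: "x \<in> C" and a: "a \<in> coset L I x"
  shows "coset L I a = coset L I x"
proof -
  have IC: "I \<subseteq> C" using I ideal_sub by auto
  obtain i where i: "i \<in> I" "a = x \<oplus> i" using coset_memD[OF a] by auto
  have iC: "i \<in> C" using i IC by auto
  show ?thesis
  proof
    show "coset L I a \<subseteq> coset L I x"
    proof
      fix y assume "y \<in> coset L I a"
      then obtain j where j: "j \<in> I" "y = a \<oplus> j" using coset_memD by blast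
      have "y = x \<oplus> (i \<oplus> j)" using j i x iC IC by (auto simp: add_assoc)
      moreover have "i \<oplus> j \<in> I" using i j I by (simp add: ideal_subspace sp_add)
      ultimately show "y \<in> coset L I x" using coset_memI by metis
    qed
  next
    show "coset L I x \<subseteq> coset L I a"
    proof
      fix y assume "y \<in> coset L I x"
      then obtain k where k: "k \<in> I" "y = x \<oplus> k" using coset_memD by blast
      have kC: "k \<in> C" using k IC by auto
      have "a \<oplus> ((-1) \<cdot> i \<oplus> k) = x \<oplus> (i \<oplus> ((-1) \<cdot> i \<oplus> k))" using i x iC kC by (simp add: add_assoc)
      also have "\<dots> = y" using k iC kC by simp
      finally have "y = a \<oplus> ((-1) \<cdot> i \<oplus> k)" by simp
      moreover have "(-1) \<cdot> i \<oplus> k \<in> I" using i k I by (simp add: ideal_subspace sp_add sp_smult)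
      ultimately show "y \<in> coset L I a" using coset_memI by metis
    qed
  qed
qed

lemma coset_eq_iff: assumes I: "ideal L I" and "x \<in> C" "y \<in> C"
  shows "coset L I x = coset L I y \<longleftrightarrow> y \<in> coset L I x"
  using coset_eq[OF I] coset_self[OF I] assms by metis

lemma coset_zero_iff: assumes I: "ideal L I" and x: "x \<in> C"
  shows "coset L I x = coset L I z0 \<longleftrightarrow> x \<in> I"
proof -
  have "coset L I x = coset L I z0 \<longleftrightarrow> x \<in> coset L I z0"
    using coset_eq_iff[OF I zero_closed x] by auto
  also have "\<dots> \<longleftrightarrow> x \<in> I"
  proof -
    have "\<forall>i\<in>I. z0 \<oplus> i = i" using ideal_sub[OF I] by auto
    then show ?thesis unfolding coset_def by force
  qed
  finally show ?thesis .
qed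

lemma coset_add: assumes I: "ideal L I" and "x \<in> C" "y \<in> C" "a \<in> coset L I x" "b \<in> coset L I y"
  shows "a \<oplus> b \<in> coset L I (x \<oplus> y)"
proof -
  have IC: "I \<subseteq> C" using I ideal_sub by auto
  obtain i j where ij: "i \<in> I" "a = x \<oplus> i" "j \<in> I" "b = y \<oplus> j" using coset_memD assms by metis
  have iC: "i \<in> C" "j \<in> C" using ij IC by auto
  have "a \<oplus> b = (x \<oplus> y) \<oplus> (i \<oplus> j)" using ij assms iC by (simp add: add_ac)
  moreover have "i \<oplus> j \<in> I" using ij I by (simp add: ideal_subspace sp_add)
  ultimately show ?thesis using coset_memI by metis
qed

lemma coset_smult: assumes I: "ideal L I" and "x \<in> C" "a \<in> coset L I x"
  shows "c \<cdot> a \<in> coset L I (c \<cdot> x)"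
proof -
  have IC: "I \<subseteq> C" using I ideal_sub by auto
  obtain i where ij: "i \<in> I" "a = x \<oplus> i" using coset_memD assms by metis
  have "c \<cdot> a = c \<cdot> x \<oplus> c \<cdot> i" using ij assms IC by (auto simp: smult_add)
  moreover have "c \<cdot> i \<in> I" using ij I by (simp add: ideal_subspace sp_smult)
  ultimately show ?thesis using coset_memI by metis
qed

lemma coset_br: assumes I: "ideal L I" and x: "x \<in> C" and y: "y \<in> C" and "a \<in> coset L I x" "b \<in> coset L I y"
  shows "br a b \<in> coset L I (br x y)"
proof -
  have IC: "I \<subseteq> C" using I ideal_sub by auto
  obtain i j where ij: "i \<in> I" "a = x \<oplus> i" "j \<in> I" "b = y \<oplus> j" using coset_memD assms by metis
  have iC: "i \<in> C" "j \<in> C" using ij IC by auto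
  have "br a b = br x y \<oplus> (br x j \<oplus> (br i y \<oplus> br i j))"
    using ij iC x y by (simp add: br_add_l br_add_r add_ac)
  moreover have "br x j \<oplus> (br i y \<oplus> br i j) \<in> I"
    using ij iC x y I by (simp add: ideal_subspace sp_add id_brl id_brr)
  ultimately show ?thesis using coset_memI by metis
qed

lemma some_coset: assumes "ideal L I" "x \<in> C" shows "(SOME a. a \<in> coset L I x) \<in> coset L I x"
  using coset_self[OF assms] by (rule someI)

lemma quot_carrier: "lcarrier (quot L I) = coset L I ` C" unfolding quot_def by simp
lemma quot_zero: "lzero (quot L I) = coset L I z0" unfolding quot_def by simp

lemma quot_add: assumes I: "ideal L I" and x: "x \<in> C" and y: "y \<in> C"
  shows "ladd (quot L I) (coset L I x) (coset L I y) = coset L I (x \<oplus> y)"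
proof -
  let ?a = "SOME a. a \<in> coset L I x" and ?b = "SOME a. a \<in> coset L I y"
  have "?a \<oplus> ?b \<in> coset L I (x \<oplus> y)" using coset_add[OF I x y some_coset[OF I x] some_coset[OF I y]] .
  then have "coset L I (?a \<oplus> ?b) = coset L I (x \<oplus> y)" using x y by (intro coset_eq[OF I]) simp_all
  then show ?thesis unfolding quot_def by simp
qed

lemma quot_smult: assumes I: "ideal L I" and x: "x \<in> C"
  shows "lsmult (quot L I) c (coset L I x) = coset L I (c \<cdot> x)"
proof -
  let ?a = "SOME a. a \<in> coset L I x"
  have "c \<cdot> ?a \<in> coset L I (c \<cdot> x)" using coset_smult[OF I x some_coset[OF I x]] .
  then have "coset L I (c \<cdot> ?a) = coset L I (c \<cdot> x)" using x by (intro coset_eq[OF I]) simp_all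
  then show ?thesis unfolding quot_def by simp
qed

lemma quot_br: assumes I: "ideal L I" and x: "x \<in> C" and y: "y \<in> C"
  shows "lbr (quot L I) (coset L I x) (coset L I y) = coset L I (br x y)"
proof -
  let ?a = "SOME a. a \<in> coset L I x" and ?b = "SOME a. a \<in> coset L I y"
  have "br ?a ?b \<in> coset L I (br x y)" using coset_br[OF I x y some_coset[OF I x] some_coset[OF I y]] .
  then have "coset L I (br ?a ?b) = coset L I (br x y)" using x y by (intro coset_eq[OF I]) simp_all
  then show ?thesis unfolding quot_def by simp
qed

lemma pi_hom: assumes I: "ideal L I" shows "alg_hom L (quot L I) (coset L I)"
  unfolding alg_hom_def using quot_add[OF I] quot_smult[OF I] quot_br[OF I] quot_carrier[of I] by auto

lemma quot_leib: assumes I: "ideal L I" shows "leib (quot L I)"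
  using img_leib[OF _ pi_hom[OF I]] quot_carrier quot_zero leib_axioms by metis

end

lemma first_iso:
  assumes A: "leib A" and I: "ideal A I" and M: "leib M" and p: "alg_hom A M p"
    and ps: "p ` lcarrier A = lcarrier M" and ker: "\<forall>x\<in>lcarrier A. p x = lzero M \<longleftrightarrow> x \<in> I"
  shows "alg_iso M (quot A I) (\<lambda>m. coset A I (SOME x. x \<in> lcarrier A \<and> p x = m))
    \<and> (\<forall>x\<in>lcarrier A. coset A I (SOME y. y \<in> lcarrier A \<and> p y = p x) = coset A I x)"
proof -
  define \<phi> where "\<phi> = (\<lambda>m. coset A I (SOME x. x \<in> lcarrier A \<and> p x = m))"
  note hz = hom_zero[OF A M p]
  have peq: "p x = p y \<longleftrightarrow> coset A I x = coset A I y" if x: "x \<in> lcarrier A" and y: "y \<in> lcarrier A" for x y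
  proof
    assume e: "p x = p y"
    let ?d = "ladd A y (lsmult A (-1) x)"
    have dC: "?d \<in> lcarrier A" using x y A by (simp add: leib.add_closed leib.smult_closed)
    have "p ?d = ladd M (p y) (lsmult M (-1) (p x))"
      using x y A by (simp add: hom_add[OF p] hom_smult[OF p] leib.smult_closed)
    also have "\<dots> = lzero M" using e hom_closed[OF p y] leib.neg_r[OF M] by simp
    finally have "?d \<in> I" using ker dC by auto
    moreover have "y = ladd A x ?d"
    proof -
      have "ladd A x ?d = ladd A y (ladd A x (lsmult A (-1) x))"
        using x y by (rule leib.add_lcomm[OF A]) (simp add: leib.smult_closed[OF A] x)
      also have "\<dots> = y" using x y by (simp add: leib.neg_r[OF A] leib.add_zero[OF A])
      finally show ?thesis by simp
    qed
    ultimately have "y \<in> coset A I x" using leib.coset_memI[OF A] by metis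
    then show "coset A I x = coset A I y" using leib.coset_eq_iff[OF A I x y] by simp
  next
    assume "coset A I x = coset A I y"
    then have "y \<in> coset A I x" using leib.coset_eq_iff[OF A I x y] by simp
    then obtain i where i: "i \<in> I" "y = ladd A x i" using leib.coset_memD[OF A] by metis
    have iC: "i \<in> lcarrier A" using i leib.ideal_sub[OF A I] by auto
    have "p y = ladd M (p x) (p i)" using i x iC hom_add[OF p] by simp
    also have "\<dots> = p x"
    proof -
      have "p i = lzero M" using ker iC i by auto
      then show ?thesis using hom_closed[OF p x] leib.add_zero[OF M] by simp
    qed
    finally show "p x = p y" by simp
  qed
  have phip: "\<phi> (p x) = coset A I x" if x: "x \<in> lcarrier A" for x
  proof -
    let ?x = "SOME y. y \<in> lcarrier A \<and> p y = p x"
    have "?x \<in> lcarrier A \<and> p ?x = p x"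
      by (rule someI[of "\<lambda>y. y \<in> lcarrier A \<and> p y = p x" x]) (simp add: x)
    then have "coset A I ?x = coset A I x" using peq[of ?x x] x by blast
    then show ?thesis unfolding \<phi>_def by simp
  qed
  have ex: "\<exists>x\<in>lcarrier A. m = p x" if "m \<in> lcarrier M" for m using that ps by auto
  have phiC: "\<phi> m \<in> coset A I ` lcarrier A" if m: "m \<in> lcarrier M" for m
  proof -
    obtain x where x: "x \<in> lcarrier A" "m = p x" using ex[OF m] by blast
    then show ?thesis using phip by simp
  qed
  have hom: "alg_hom M (quot A I) \<phi>"
    unfolding alg_hom_def
  proof (intro conjI ballI allI)
    show "\<phi> ` lcarrier M \<subseteq> lcarrier (quot A I)"
      using phiC unfolding leib.quot_carrier[OF A] by auto
  next
    fix m1 m2 assume m: "m1 \<in> lcarrier M" "m2 \<in> lcarrier M"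
    then obtain x1 x2 where x: "x1 \<in> lcarrier A" "x2 \<in> lcarrier A" "m1 = p x1" "m2 = p x2" using ex by metis
    have e1: "ladd M m1 m2 = p (ladd A x1 x2)" using x hom_add[OF p] by simp
    have e2: "lbr M m1 m2 = p (lbr A x1 x2)" using x hom_br[OF p] by simp
    have c1: "ladd A x1 x2 \<in> lcarrier A" "lbr A x1 x2 \<in> lcarrier A"
      using x leib.add_closed[OF A] leib.br_closed[OF A] by auto
    show "\<phi> (ladd M m1 m2) = ladd (quot A I) (\<phi> m1) (\<phi> m2)"
      unfolding e1 phip[OF c1(1)] using x phip leib.quot_add[OF A I] by simp
    show "\<phi> (lbr M m1 m2) = lbr (quot A I) (\<phi> m1) (\<phi> m2)"
      unfolding e2 phip[OF c1(2)] using x phip leib.quot_br[OF A I] by simp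
  next
    fix c m assume m: "m \<in> lcarrier M"
    then obtain x where x: "x \<in> lcarrier A" "m = p x" using ex by metis
    have e1: "lsmult M c m = p (lsmult A c x)" using x hom_smult[OF p] by simp
    have c1: "lsmult A c x \<in> lcarrier A" using x leib.smult_closed[OF A] by auto
    show "\<phi> (lsmult M c m) = lsmult (quot A I) c (\<phi> m)"
      unfolding e1 phip[OF c1] using x phip leib.quot_smult[OF A I] by simp
  qed
  have inj: "inj_on \<phi> (lcarrier M)"
  proof
    fix m1 m2 assume m: "m1 \<in> lcarrier M" "m2 \<in> lcarrier M" and e: "\<phi> m1 = \<phi> m2"
    then obtain x1 x2 where x: "x1 \<in> lcarrier A" "x2 \<in> lcarrier A" "m1 = p x1" "m2 = p x2" using ex by metis
    then have "coset A I x1 = coset A I x2" using e phip by simp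
    then show "m1 = m2" using x peq by simp
  qed
  have img: "\<phi> ` lcarrier M = lcarrier (quot A I)"
    unfolding leib.quot_carrier[OF A]
  proof
    show "\<phi> ` lcarrier M \<subseteq> coset A I ` lcarrier A" using phiC by auto
    show "coset A I ` lcarrier A \<subseteq> \<phi> ` lcarrier M"
    proof
      fix X assume "X \<in> coset A I ` lcarrier A"
      then obtain x where x: "x \<in> lcarrier A" "X = coset A I x" by auto
      then have "X = \<phi> (p x)" using phip by simp
      moreover have "p x \<in> lcarrier M" using hom_closed[OF p x(1)] .
      ultimately show "X \<in> \<phi> ` lcarrier M" by blast
    qed
  qed
  have "alg_iso M (quot A I) \<phi>" unfolding alg_iso_def bij_betw_def using hom inj img by simp
  moreover have "\<forall>x\<in>lcarrier A. coset A I (SOME y. y \<in> lcarrier A \<and> p y = p x) = coset A I x"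
    using phip unfolding \<phi>_def by simp
  ultimately show ?thesis unfolding \<phi>_def by simp
qed



lemma img_ideal:
  assumes A: "leib A" and B: "leib B" and h: "alg_hom A B f" and s: "f ` lcarrier A = lcarrier B"
    and I: "ideal A I"
  shows "ideal B (f ` I)"
proof -
  have IC: "I \<subseteq> lcarrier A" using leib.ideal_sub[OF A I] .
  show ?thesis
proof (rule leib.ideal_I[OF B])
  show "f ` I \<subseteq> lcarrier B" using IC hom_closed[OF h] by auto
  have "lzero A \<in> I" using leib.sp_zero[OF A leib.ideal_subspace[OF A I]] .
  then show "lzero B \<in> f ` I" using hom_zero[OF A B h] by force
  fix x y assume "x \<in> f ` I" "y \<in> f ` I"
  then obtain a b where ab: "a \<in> I" "b \<in> I" "x = f a" "y = f b" by auto
  have "a \<in> lcarrier A" "b \<in> lcarrier A" using ab IC by auto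
  then have "ladd B x y = f (ladd A a b)" using ab hom_add[OF h] by simp
  moreover have "ladd A a b \<in> I" using ab leib.sp_add[OF A leib.ideal_subspace[OF A I]] by auto
  ultimately show "ladd B x y \<in> f ` I" by auto
next
  fix c x assume "x \<in> f ` I"
  then obtain a where ab: "a \<in> I" "x = f a" by auto
  then have "lsmult B c x = f (lsmult A c a)" using IC hom_smult[OF h] by auto
  moreover have "lsmult A c a \<in> I" using ab leib.sp_smult[OF A leib.ideal_subspace[OF A I]] by auto
  ultimately show "lsmult B c x \<in> f ` I" by auto
next
  fix x i assume x: "x \<in> lcarrier B" and "i \<in> f ` I"
  then obtain a where ab: "a \<in> I" "i = f a" by auto
  obtain x' where x': "x' \<in> lcarrier A" "x = f x'" using x s by auto
  have "lbr B x i = f (lbr A x' a)" using IC ab x' hom_br[OF h] by auto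
  moreover have "lbr A x' a \<in> I" using leib.id_brl[OF A I] ab x' by auto
  ultimately show "lbr B x i \<in> f ` I" by auto
  have "lbr B i x = f (lbr A a x')" using IC ab x' hom_br[OF h] by auto
  moreover have "lbr A a x' \<in> I" using leib.id_brr[OF A I] ab x' by auto
  ultimately show "lbr B i x \<in> f ` I" by auto
qed
qed

lemma pre_ideal:
  assumes A: "leib A" and B: "leib B" and h: "alg_hom A B f" and J: "ideal B J"
  shows "ideal A {x \<in> lcarrier A. f x \<in> J}"
proof -
  note JS = leib.ideal_subspace[OF B J]
  show ?thesis
proof (rule leib.ideal_I[OF A])
  show "{x \<in> lcarrier A. f x \<in> J} \<subseteq> lcarrier A" by auto
  show "lzero A \<in> {x \<in> lcarrier A. f x \<in> J}"
    using hom_zero[OF A B h] leib.sp_zero[OF B JS] leib.zero_closed[OF A] by simp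
  fix x y assume "x \<in> {x \<in> lcarrier A. f x \<in> J}" "y \<in> {x \<in> lcarrier A. f x \<in> J}"
  then show "ladd A x y \<in> {x \<in> lcarrier A. f x \<in> J}"
    using hom_add[OF h] leib.sp_add[OF B JS] leib.add_closed[OF A] by simp
next
  fix c x assume "x \<in> {x \<in> lcarrier A. f x \<in> J}"
  then show "lsmult A c x \<in> {x \<in> lcarrier A. f x \<in> J}"
    using hom_smult[OF h] leib.sp_smult[OF B JS] leib.smult_closed[OF A] by simp
next
  fix x i assume x: "x \<in> lcarrier A" and "i \<in> {x \<in> lcarrier A. f x \<in> J}"
  then have i: "i \<in> lcarrier A" "f i \<in> J" by auto
  show "lbr A x i \<in> {x \<in> lcarrier A. f x \<in> J}"
    using hom_br[OF h x i(1)] leib.id_brl[OF B J hom_closed[OF h x] i(2)] leib.br_closed[OF A x i(1)] by simp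
  show "lbr A i x \<in> {x \<in> lcarrier A. f x \<in> J}"
    using hom_br[OF h i(1) x] leib.id_brr[OF B J hom_closed[OF h x] i(2)] leib.br_closed[OF A i(1) x] by simp
qed
qed

lemma img_lower:
  assumes A: "leib A" and B: "leib B" and h: "alg_hom A B f" and s: "f ` lcarrier A = lcarrier B"
  shows "f ` lower_lie A (Suc i) = lower_lie B (Suc i)"
proof (induction i)
  case 0 then show ?case using s by simp
next
  case (Suc i)
  let ?GA = "{lie_br A m x | m x. m \<in> lower_lie A (Suc i) \<and> x \<in> lcarrier A}"
  let ?GB = "{lie_br B m x | m x. m \<in> lower_lie B (Suc i) \<and> x \<in> lcarrier B}"
  have GA: "?GA \<subseteq> lcarrier A"
  proof
    fix w assume "w \<in> ?GA"
    then obtain m x where w: "w = lie_br A m x" "m \<in> lower_lie A (Suc i)" "x \<in> lcarrier A" by blast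
    then show "w \<in> lcarrier A" using leib.lower_lie_C[OF A] leib.s_closed[OF A] by auto
  qed
  have GB: "?GB \<subseteq> lcarrier B"
  proof
    fix w assume "w \<in> ?GB"
    then obtain m x where w: "w = lie_br B m x" "m \<in> lower_lie B (Suc i)" "x \<in> lcarrier B" by blast
    then show "w \<in> lcarrier B" using leib.lower_lie_C[OF B] leib.s_closed[OF B] by auto
  qed
  have IA: "ideal A (ideal_gen A ?GA)" using leib.ideal_gen_ideal[OF A GA] .
  have IB: "ideal B (ideal_gen B ?GB)" using leib.ideal_gen_ideal[OF B GB] .
  have sub1: "ideal_gen A ?GA \<subseteq> {x \<in> lcarrier A. f x \<in> ideal_gen B ?GB}"
  proof (rule leib.ideal_gen_least[OF A pre_ideal[OF A B h IB]])
    show "?GA \<subseteq> {x \<in> lcarrier A. f x \<in> ideal_gen B ?GB}"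
    proof
      fix w assume "w \<in> ?GA"
      then obtain m x where w: "w = lie_br A m x" "m \<in> lower_lie A (Suc i)" "x \<in> lcarrier A" by blast
      have mC: "m \<in> lcarrier A" using w(2) leib.lower_lie_C[OF A] by auto
      have fw: "f w = lie_br B (f m) (f x)" using hom_s'[OF A h mC w(3)] w(1) by simp
      have fm: "f m \<in> lower_lie B (Suc i)" using imageI[OF w(2), of f] unfolding Suc.IH .
      have fx: "f x \<in> lcarrier B" using hom_closed[OF h w(3)] .
      have "f w \<in> ?GB" unfolding fw
        by (rule CollectI, rule exI[of _ "f m"], rule exI[of _ "f x"]) (simp add: fm fx)
      then have "f w \<in> ideal_gen B ?GB" by (rule subsetD[OF leib.ideal_gen_sub[OF B]])
      moreover have "w \<in> lcarrier A" using GA \<open>w \<in> ?GA\<close> by blast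
      ultimately show "w \<in> {x \<in> lcarrier A. f x \<in> ideal_gen B ?GB}" by simp
    qed
  qed
  have sub2: "ideal_gen B ?GB \<subseteq> f ` ideal_gen A ?GA"
  proof (rule leib.ideal_gen_least[OF B img_ideal[OF A B h s IA]])
    show "?GB \<subseteq> f ` ideal_gen A ?GA"
    proof
      fix w assume "w \<in> ?GB"
      then obtain m x where w: "w = lie_br B m x" "m \<in> lower_lie B (Suc i)" "x \<in> lcarrier B" by blast
      have "m \<in> f ` lower_lie A (Suc i)" using w(2) unfolding Suc.IH .
      then obtain m' where m': "m' \<in> lower_lie A (Suc i)" "m = f m'" by auto
      obtain x' where x': "x' \<in> lcarrier A" "x = f x'" using s w(3) by auto
      have mC: "m' \<in> lcarrier A" using m'(1) leib.lower_lie_C[OF A] by auto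
      have "w = f (lie_br A m' x')" using w m' x' mC hom_s'[OF A h] by simp
      moreover have "lie_br A m' x' \<in> ?GA"
        by (rule CollectI, rule exI[of _ m'], rule exI[of _ x']) (simp add: m' x')
      then have "lie_br A m' x' \<in> ideal_gen A ?GA" by (rule subsetD[OF leib.ideal_gen_sub[OF A]])
      ultimately show "w \<in> f ` ideal_gen A ?GA" by blast
    qed
  qed
  have "f ` ideal_gen A ?GA \<subseteq> ideal_gen B ?GB" using sub1 by auto
  then show ?case unfolding lower_lie.simps lie_comm_def using sub2 by (rule subset_antisym)
qed

lemma img_upper:
  assumes A: "leib A" and B: "leib B" and h: "alg_hom A B f" and s: "f ` lcarrier A = lcarrier B"
  shows "f ` upper_lie A j \<subseteq> upper_lie B j"
proof (induction j)
  case 0 then show ?case using hom_zero[OF A B h] by simp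
next
  case (Suc j)
  show ?case
  proof
    fix X assume "X \<in> f ` upper_lie A (Suc j)"
    then obtain x where x: "X = f x" "x \<in> lcarrier A" "\<forall>y\<in>lcarrier A. lie_br A x y \<in> upper_lie A j" by auto
    have "lie_br B X Y \<in> upper_lie B j" if Y: "Y \<in> lcarrier B" for Y
    proof -
      obtain y where y: "y \<in> lcarrier A" "Y = f y" using s Y by auto
      have "lie_br B X Y = f (lie_br A x y)" using x y hom_s'[OF A h] by simp
      then show ?thesis using Suc x y by auto
    qed
    then show "X \<in> upper_lie B (Suc j)" using hom_closed[OF h x(2)] x(1) by simp
  qed
qed

lemma hom_comp: "alg_hom A B f \<Longrightarrow> alg_hom B D g \<Longrightarrow> alg_hom A D (\<lambda>x. g (f x))"
  unfolding alg_hom_def by (auto simp: image_subset_iff)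



lemma isoclinic_quot:
  assumes A: "leib A" and N: "ideal A N" and NG: "N \<inter> lower_lie A (Suc n) \<subseteq> {lzero A}"
    and inv: "\<And>x y. (\<forall>i\<le>n. x i \<in> lcarrier A \<and> y i \<in> lcarrier A \<and>
        coset A (upper_lie A n) (x i) = coset A (upper_lie A n) (y i)) \<Longrightarrow> lie_word A x n = lie_word A y n"
  shows "lie_isoclinic (quot A N) A n"
proof -
  define Q where "Q = quot A N"
  define \<pi> where "\<pi> = coset A N"
  have QL: "leib Q" unfolding Q_def using leib.quot_leib[OF A N] .
  have ph: "alg_hom A Q \<pi>" unfolding Q_def \<pi>_def using leib.pi_hom[OF A N] .
  have ps: "\<pi> ` lcarrier A = lcarrier Q" unfolding Q_def \<pi>_def leib.quot_carrier[OF A] ..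
  have pz: "lzero Q = \<pi> (lzero A)" unfolding Q_def \<pi>_def leib.quot_zero[OF A] ..
  have ker: "\<pi> x = lzero Q \<longleftrightarrow> x \<in> N" if x: "x \<in> lcarrier A" for x
    unfolding pz \<pi>_def using leib.coset_zero_iff[OF A N x] .
  define ZA where "ZA = upper_lie A n"
  define ZQ where "ZQ = upper_lie Q n"
  have ZAI: "ideal A ZA" unfolding ZA_def using leib.upper_lie_ideal[OF A] .
  have ZQI: "ideal Q ZQ" unfolding ZQ_def using leib.upper_lie_ideal[OF QL] .
  have pre: "x \<in> upper_lie A j"
    if "j \<le> n" "x \<in> lcarrier A" "\<pi> x \<in> upper_lie Q j" "x \<in> lower_lie A (Suc (n - j))" for j x
    using that
  proof (induction j arbitrary: x)
    case 0
    then have "\<pi> x = lzero Q" by simp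
    then have "x \<in> N" using ker 0 by simp
    then have "x = lzero A" using NG 0 by auto
    then show ?case by simp
  next
    case (Suc j)
    have "lie_br A x y \<in> upper_lie A j" if y: "y \<in> lcarrier A" for y
    proof (rule Suc.IH)
      show "j \<le> n" using Suc.prems by simp
      show xy: "lie_br A x y \<in> lcarrier A" using Suc.prems y leib.s_closed[OF A] by simp
      have "\<pi> (lie_br A x y) = lie_br Q (\<pi> x) (\<pi> y)" using hom_s'[OF A ph] Suc.prems y by simp
      moreover have "\<pi> y \<in> lcarrier Q" using hom_closed[OF ph y] .
      ultimately show "\<pi> (lie_br A x y) \<in> upper_lie Q j" using Suc.prems by simp
      have e: "n - j = Suc (n - Suc j)" using Suc.prems by simp
      show "lie_br A x y \<in> lower_lie A (Suc (n - j))" unfolding e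
        using leib.lower_gen[OF A] Suc.prems y by simp
    qed
    then show ?case using Suc.prems by simp
  qed
  have Ziff: "\<pi> x \<in> ZQ \<longleftrightarrow> x \<in> ZA" if x: "x \<in> lcarrier A" for x
  proof
    assume "\<pi> x \<in> ZQ"
    then show "x \<in> ZA" unfolding ZA_def using pre[of n x] x ZQ_def by simp
  next
    assume "x \<in> ZA"
    then show "\<pi> x \<in> ZQ" unfolding ZQ_def using img_upper[OF A QL ph ps, of n] ZA_def by auto
  qed
  define p where "p = (\<lambda>x. coset Q ZQ (\<pi> x))"
  have QZL: "leib (quot Q ZQ)" using leib.quot_leib[OF QL ZQI] .
  have p_hom: "alg_hom A (quot Q ZQ) p" unfolding p_def using hom_comp[OF ph leib.pi_hom[OF QL ZQI]] .
  have p_s: "p ` lcarrier A = lcarrier (quot Q ZQ)"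
    unfolding p_def leib.quot_carrier[OF QL] ps[symmetric] by (simp add: image_image)
  have p_ker: "\<forall>x\<in>lcarrier A. p x = lzero (quot Q ZQ) \<longleftrightarrow> x \<in> ZA"
  proof
    fix x assume x: "x \<in> lcarrier A"
    have "p x = lzero (quot Q ZQ) \<longleftrightarrow> coset Q ZQ (\<pi> x) = coset Q ZQ (lzero Q)"
      unfolding p_def leib.quot_zero[OF QL] ..
    also have "\<dots> \<longleftrightarrow> \<pi> x \<in> ZQ" using leib.coset_zero_iff[OF QL ZQI hom_closed[OF ph x]] .
    also have "\<dots> \<longleftrightarrow> x \<in> ZA" using Ziff[OF x] .
    finally show "p x = lzero (quot Q ZQ) \<longleftrightarrow> x \<in> ZA" .
  qed
  define \<eta> where "\<eta> = (\<lambda>m. coset A ZA (SOME x. x \<in> lcarrier A \<and> p x = m))"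
  have FI: "alg_iso (quot Q ZQ) (quot A ZA) \<eta> \<and> (\<forall>x\<in>lcarrier A. \<eta> (p x) = coset A ZA x)"
    unfolding \<eta>_def using first_iso[OF A ZAI QZL p_hom p_s p_ker] by simp
  have eta_iso: "alg_iso (quot Q ZQ) (quot A ZA) \<eta>" using FI by simp
  have etap: "\<eta> (p x) = coset A ZA x" if "x \<in> lcarrier A" for x using FI that by simp
  define GA where "GA = lower_lie A (Suc n)"
  define GQ where "GQ = lower_lie Q (Suc n)"
  have GQ: "\<pi> ` GA = GQ" unfolding GA_def GQ_def using img_lower[OF A QL ph ps] .
  have GAI: "ideal A GA" unfolding GA_def using leib.lower_lie_ideal[OF A] .
  have GAC: "GA \<subseteq> lcarrier A" using leib.ideal_sub[OF A GAI] .
  have inj: "inj_on \<pi> GA"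
  proof
    fix a b assume a: "a \<in> GA" and b: "b \<in> GA" and e: "\<pi> a = \<pi> b"
    have aC: "a \<in> lcarrier A" and bC: "b \<in> lcarrier A" using a b GAC by auto
    have "b \<in> coset A N a" using e unfolding \<pi>_def using leib.coset_eq_iff[OF A N aC bC] by simp
    then obtain i where i: "i \<in> N" "b = ladd A a i" using leib.coset_memD[OF A] by metis
    have iC: "i \<in> lcarrier A" using i leib.ideal_sub[OF A N] by auto
    have "i = ladd A (lsmult A (-1) a) b" using i aC iC leib.neg_l2[OF A] by simp
    moreover have "ladd A (lsmult A (-1) a) b \<in> GA"
      using a b leib.ideal_subspace[OF A GAI] leib.sp_add[OF A] leib.sp_smult[OF A] by simp
    ultimately have "i \<in> GA" by simp
    then have "i = lzero A" using i NG unfolding GA_def by auto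
    then show "a = b" using i aC by (simp add: leib.add_zero[OF A])
  qed
  define \<xi> where "\<xi> = inv_into GA \<pi>"
  have bij: "bij_betw \<pi> GA GQ" using inj GQ unfolding bij_betw_def by simp
  have xbij: "bij_betw \<xi> GQ GA" unfolding \<xi>_def using bij_betw_inv_into[OF bij] .
  have xp: "\<xi> (\<pi> a) = a" if "a \<in> GA" for a unfolding \<xi>_def using inv_into_f_f[OF inj that] .
  have xi_hom: "alg_hom (restrict_alg Q GQ) (restrict_alg A GA) \<xi>"
    unfolding alg_hom_def restrict_simps
  proof (intro conjI ballI allI)
    show "\<xi> ` GQ \<subseteq> GA" using xbij unfolding bij_betw_def by simp
  next
    fix X Y assume X: "X \<in> GQ" and Y: "Y \<in> GQ"
    then obtain a b where ab: "a \<in> GA" "b \<in> GA" "X = \<pi> a" "Y = \<pi> b" using GQ by auto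
    have abC: "a \<in> lcarrier A" "b \<in> lcarrier A" using ab GAC by auto
    have s1: "ladd A a b \<in> GA" using ab leib.ideal_subspace[OF A GAI] leib.sp_add[OF A] by simp
    have s2: "lbr A a b \<in> GA" using ab abC leib.id_brl[OF A GAI] by simp
    show "\<xi> (ladd Q X Y) = ladd A (\<xi> X) (\<xi> Y)"
      using hom_add[OF ph abC] xp[OF s1] xp ab by simp
    show "\<xi> (lbr Q X Y) = lbr A (\<xi> X) (\<xi> Y)"
      using hom_br[OF ph abC] xp[OF s2] xp ab by simp
  next
    fix c X assume X: "X \<in> GQ"
    then obtain a where ab: "a \<in> GA" "X = \<pi> a" using GQ by auto
    have abC: "a \<in> lcarrier A" using ab GAC by auto
    have s1: "lsmult A c a \<in> GA" using ab leib.ideal_subspace[OF A GAI] leib.sp_smult[OF A] by simp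
    show "\<xi> (lsmult Q c X) = lsmult A c (\<xi> X)"
      using hom_smult[OF ph abC] xp[OF s1] xp ab by simp
  qed
  have xi_iso: "alg_iso (restrict_alg Q GQ) (restrict_alg A GA) \<xi>"
    unfolding alg_iso_def using xi_hom xbij by simp
  have cond: "\<xi> (lie_word Q X n) = lie_word A y n"
    if H: "\<forall>i\<le>n. X i \<in> lcarrier Q \<and> y i \<in> lcarrier A \<and> \<eta> (coset Q ZQ (X i)) = coset A ZA (y i)" for X y
  proof -
    define x where "x = (\<lambda>i. SOME a. a \<in> lcarrier A \<and> \<pi> a = X i)"
    have xi: "x i \<in> lcarrier A \<and> \<pi> (x i) = X i" if "i \<le> n" for i
    proof -
      have "X i \<in> \<pi> ` lcarrier A" using H that ps by auto
      then have "\<exists>a. a \<in> lcarrier A \<and> \<pi> a = X i" by auto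
      then show ?thesis unfolding x_def by (rule someI_ex)
    qed
    have cx: "x i \<in> lcarrier A \<and> y i \<in> lcarrier A \<and> coset A ZA (x i) = coset A ZA (y i)" if "i \<le> n" for i
    proof -
      have "\<eta> (coset Q ZQ (X i)) = \<eta> (p (x i))" unfolding p_def using xi[OF that] by simp
      then show ?thesis using etap xi[OF that] H that by simp
    qed
    have "lie_word Q X n = lie_word Q (\<lambda>i. \<pi> (x i)) n" using xi by (intro lie_word_cong) simp
    also have "\<dots> = \<pi> (lie_word A x n)" using hom_lw[OF A ph] xi by simp
    finally have "\<xi> (lie_word Q X n) = lie_word A x n"
      using xp leib.lw_lower[OF A] xi unfolding GA_def by simp
    also have "\<dots> = lie_word A y n" using inv cx unfolding ZA_def by simp
    finally show ?thesis .
  qed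
  have "lie_isoclinism Q A n \<eta> \<xi>"
    unfolding lie_isoclinism_def using eta_iso xi_iso cond
    unfolding ZA_def ZQ_def GA_def GQ_def by blast
  then show ?thesis unfolding lie_isoclinic_def Q_def by blast
qed



lemma lw_join: "lie_word L (z(0 := lie_word L x n)) m = lie_word L (\<lambda>i. if i \<le> n then x i else z (i - n)) (n + m)"
proof (induction m)
  case 0 then show ?case by (simp add: lie_word_cong)
next
  case (Suc m)
  have "lie_word L (z(0 := lie_word L x n)) (Suc m) = lie_br L (lie_word L (z(0 := lie_word L x n)) m) (z (Suc m))"
    by simp
  also have "\<dots> = lie_br L (lie_word L (\<lambda>i. if i \<le> n then x i else z (i - n)) (n + m)) (z (Suc m))"
    by (simp only: Suc.IH)
  also have "\<dots> = lie_word L (\<lambda>i. if i \<le> n then x i else z (i - n)) (n + Suc m)"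
    by (simp add: Suc_diff_le)
  finally show ?case .
qed

locale isoc =
  fixes L1 :: "('k::field, 'a) lalg" and L2 :: "('k, 'b) lalg"
    and n :: nat and \<eta> :: "'a set \<Rightarrow> 'b set" and \<xi> :: "'a \<Rightarrow> 'b" and K :: "('a \<times> 'b) set"
  assumes A1: "leib L1" and A2: "leib L2"
    and iso: "lie_isoclinism L1 L2 n \<eta> \<xi>"
    and K_def: "K = {(g, h). g \<in> lcarrier L1 \<and> h \<in> lcarrier L2 \<and>
                  \<eta> (coset L1 (upper_lie L1 n) g) = coset L2 (upper_lie L2 n) h}"
begin

abbreviation "C1 \<equiv> lcarrier L1"
abbreviation "C2 \<equiv> lcarrier L2"
abbreviation "Z1n \<equiv> upper_lie L1 n"
abbreviation "Z2n \<equiv> upper_lie L2 n"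
abbreviation "c1 \<equiv> coset L1 Z1n"
abbreviation "c2 \<equiv> coset L2 Z2n"
abbreviation "Q1 \<equiv> quot L1 Z1n"
abbreviation "Q2 \<equiv> quot L2 Z2n"
abbreviation "G1 \<equiv> lower_lie L1 (Suc n)"
abbreviation "G2 \<equiv> lower_lie L2 (Suc n)"
abbreviation "KA \<equiv> restrict_alg (dsum L1 L2) K"

lemma Z1I: "ideal L1 Z1n" using leib.upper_lie_ideal[OF A1] .
lemma Z2I: "ideal L2 Z2n" using leib.upper_lie_ideal[OF A2] .
lemma Q1L: "leib Q1" using leib.quot_leib[OF A1 Z1I] .
lemma Q2L: "leib Q2" using leib.quot_leib[OF A2 Z2I] .
lemma eta_iso: "alg_iso Q1 Q2 \<eta>" using iso unfolding lie_isoclinism_def by simp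
lemma xi_iso: "alg_iso (restrict_alg L1 G1) (restrict_alg L2 G2) \<xi>" using iso unfolding lie_isoclinism_def by simp
lemma cond: "(\<forall>i\<le>n. x i \<in> C1 \<and> y i \<in> C2 \<and> \<eta> (c1 (x i)) = c2 (y i)) \<Longrightarrow> \<xi> (lie_word L1 x n) = lie_word L2 y n"
  using iso unfolding lie_isoclinism_def by blast

lemma eta_hom: "alg_hom Q1 Q2 \<eta>" using eta_iso unfolding alg_iso_def by simp
lemma eta_bij: "bij_betw \<eta> (lcarrier Q1) (lcarrier Q2)" using eta_iso unfolding alg_iso_def by simp

lemma K_mem: "(g, h) \<in> K \<longleftrightarrow> g \<in> C1 \<and> h \<in> C2 \<and> \<eta> (c1 g) = c2 h" unfolding K_def by simp

lemma K_sub: "K \<subseteq> C1 \<times> C2" unfolding K_def by auto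

lemma ex_right: assumes "g \<in> C1" shows "\<exists>h. (g, h) \<in> K"
proof -
  have "c1 g \<in> lcarrier Q1" using assms leib.quot_carrier[OF A1] by simp
  then have "\<eta> (c1 g) \<in> lcarrier Q2" using eta_bij unfolding bij_betw_def by auto
  then obtain h where "h \<in> C2" "\<eta> (c1 g) = c2 h" using leib.quot_carrier[OF A2] by auto
  then show ?thesis using assms K_mem by auto
qed

lemma ex_left: assumes "h \<in> C2" shows "\<exists>g. (g, h) \<in> K"
proof -
  have "c2 h \<in> lcarrier Q2" using assms leib.quot_carrier[OF A2] by simp
  then have "c2 h \<in> \<eta> ` lcarrier Q1" using eta_bij unfolding bij_betw_def by auto
  then obtain g where "g \<in> C1" "\<eta> (c1 g) = c2 h" using leib.quot_carrier[OF A1] by auto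
  then show ?thesis using assms K_mem by auto
qed

lemma eta_zero: "\<eta> (c1 (lzero L1)) = c2 (lzero L2)"
  using hom_zero[OF Q1L Q2L eta_hom] leib.quot_zero[OF A1] leib.quot_zero[OF A2] by simp

lemma eta_add: assumes "(g, h) \<in> K" "(g', h') \<in> K" shows "\<eta> (c1 (ladd L1 g g')) = c2 (ladd L2 h h')"
proof -
  have m: "g \<in> C1" "h \<in> C2" "g' \<in> C1" "h' \<in> C2" "\<eta> (c1 g) = c2 h" "\<eta> (c1 g') = c2 h'" using assms K_mem by auto
  have "\<eta> (c1 (ladd L1 g g')) = \<eta> (ladd Q1 (c1 g) (c1 g'))" using leib.quot_add[OF A1 Z1I] m by simp
  also have "\<dots> = ladd Q2 (\<eta> (c1 g)) (\<eta> (c1 g'))"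
    using hom_add[OF eta_hom] m leib.quot_carrier[OF A1] by simp
  also have "\<dots> = c2 (ladd L2 h h')" using m leib.quot_add[OF A2 Z2I] by simp
  finally show ?thesis .
qed

lemma eta_smult: assumes "(g, h) \<in> K" shows "\<eta> (c1 (lsmult L1 c g)) = c2 (lsmult L2 c h)"
proof -
  have m: "g \<in> C1" "h \<in> C2" "\<eta> (c1 g) = c2 h" using assms K_mem by auto
  have "\<eta> (c1 (lsmult L1 c g)) = \<eta> (lsmult Q1 c (c1 g))" using leib.quot_smult[OF A1 Z1I] m by simp
  also have "\<dots> = lsmult Q2 c (\<eta> (c1 g))"
    using hom_smult[OF eta_hom] m leib.quot_carrier[OF A1] by simp
  also have "\<dots> = c2 (lsmult L2 c h)" using m leib.quot_smult[OF A2 Z2I] by simp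
  finally show ?thesis .
qed

lemma eta_br: assumes "(g, h) \<in> K" "(g', h') \<in> K" shows "\<eta> (c1 (lbr L1 g g')) = c2 (lbr L2 h h')"
proof -
  have m: "g \<in> C1" "h \<in> C2" "g' \<in> C1" "h' \<in> C2" "\<eta> (c1 g) = c2 h" "\<eta> (c1 g') = c2 h'" using assms K_mem by auto
  have "\<eta> (c1 (lbr L1 g g')) = \<eta> (lbr Q1 (c1 g) (c1 g'))" using leib.quot_br[OF A1 Z1I] m by simp
  also have "\<dots> = lbr Q2 (\<eta> (c1 g)) (\<eta> (c1 g'))"
    using hom_br[OF eta_hom] m leib.quot_carrier[OF A1] by simp
  also have "\<dots> = c2 (lbr L2 h h')" using m leib.quot_br[OF A2 Z2I] by simp
  finally show ?thesis .
qed

lemma K_zero: "(lzero L1, lzero L2) \<in> K"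
  using K_mem eta_zero leib.zero_closed[OF A1] leib.zero_closed[OF A2] by simp

lemma K_add: "(g, h) \<in> K \<Longrightarrow> (g', h') \<in> K \<Longrightarrow> (ladd L1 g g', ladd L2 h h') \<in> K"
  using eta_add K_mem leib.add_closed[OF A1] leib.add_closed[OF A2] by simp

lemma K_smult: "(g, h) \<in> K \<Longrightarrow> (lsmult L1 c g, lsmult L2 c h) \<in> K"
  using eta_smult K_mem leib.smult_closed[OF A1] leib.smult_closed[OF A2] by simp

lemma K_br: "(g, h) \<in> K \<Longrightarrow> (g', h') \<in> K \<Longrightarrow> (lbr L1 g g', lbr L2 h h') \<in> K"
  using eta_br K_mem leib.br_closed[OF A1] leib.br_closed[OF A2] by simp

lemma K_s: assumes "(g, h) \<in> K" "(g', h') \<in> K" shows "(lie_br L1 g g', lie_br L2 h h') \<in> K"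
  unfolding lie_br_def using assms by (intro K_add K_br)

lemma K_subalg: "subalgebra (dsum L1 L2) K"
  unfolding subalgebra_def subspace_def
proof (intro conjI ballI allI)
  show "K \<subseteq> lcarrier (dsum L1 L2)" using K_sub by simp
  show "lzero (dsum L1 L2) \<in> K" using K_zero by simp
  fix x y assume "x \<in> K" "y \<in> K"
  then show "ladd (dsum L1 L2) x y \<in> K" "lbr (dsum L1 L2) x y \<in> K"
    using K_add K_br by (cases x, cases y, simp)+
next
  fix c x assume "x \<in> K"
  then show "lsmult (dsum L1 L2) c x \<in> K" using K_smult by (cases x) simp
qed

lemma KL: "leib KA" using sub_leib[OF dsum_leib[OF A1 A2] K_subalg] .

lemma fst_hom: "alg_hom KA L1 fst"
  unfolding alg_hom_def restrict_simps using K_sub by (auto simp: split_paired_all)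
lemma snd_hom: "alg_hom KA L2 snd"
  unfolding alg_hom_def restrict_simps using K_sub by (auto simp: split_paired_all)
lemma fst_surj: "fst ` lcarrier KA = C1"
  using K_sub ex_right by (force simp: restrict_simps)
lemma snd_surj: "snd ` lcarrier KA = C2"
  using K_sub ex_left by (force simp: restrict_simps)

lemma KA_lw: "lie_word KA x k = (lie_word L1 (\<lambda>i. fst (x i)) k, lie_word L2 (\<lambda>i. snd (x i)) k)"
  by (simp add: dsum_lie_word)

end


context leib begin
lemma lw_ideal_closed: assumes J: "ideal L J" and g: "g \<in> J" and z: "\<forall>j. 0 < j \<and> j \<le> m \<longrightarrow> z j \<in> C"
  shows "lie_word L (z(0 := g)) m \<in> J"
  using z
proof (induction m)
  case 0 then show ?case using g by simp
next
  case (Suc m)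
  have p: "\<forall>j. 0 < j \<and> j \<le> m \<longrightarrow> z j \<in> C" using Suc.prems by simp
  have "lie_word L (z(0 := g)) m \<in> J" using Suc.IH[OF p] .
  moreover have "z (Suc m) \<in> C" using Suc.prems by auto
  ultimately show ?case unfolding lw_upd_Suc using id_s[OF J] by simp
qed
end

context isoc begin

lemma G1I: "ideal L1 G1" using leib.lower_lie_ideal[OF A1] .
lemma G2I: "ideal L2 G2" using leib.lower_lie_ideal[OF A2] .
lemma G1C: "G1 \<subseteq> C1" using leib.ideal_sub[OF A1 G1I] .
lemma G2C: "G2 \<subseteq> C2" using leib.ideal_sub[OF A2 G2I] .
lemma xi_hom: "alg_hom (restrict_alg L1 G1) (restrict_alg L2 G2) \<xi>" using xi_iso unfolding alg_iso_def by simp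
lemma xi_inj: "inj_on \<xi> G1" using xi_iso unfolding alg_iso_def bij_betw_def by simp
lemma xi_G2: "g \<in> G1 \<Longrightarrow> \<xi> g \<in> G2" using xi_hom unfolding alg_hom_def by auto
lemma xi_C2: "g \<in> G1 \<Longrightarrow> \<xi> g \<in> C2" using xi_G2 G2C by auto
lemma xi_add: "a \<in> G1 \<Longrightarrow> b \<in> G1 \<Longrightarrow> \<xi> (ladd L1 a b) = ladd L2 (\<xi> a) (\<xi> b)"
  using xi_hom unfolding alg_hom_def by simp
lemma xi_smult: "a \<in> G1 \<Longrightarrow> \<xi> (lsmult L1 c a) = lsmult L2 c (\<xi> a)"
  using xi_hom unfolding alg_hom_def by simp
lemma zero_G1: "lzero L1 \<in> G1" using leib.sp_zero[OF A1 leib.ideal_subspace[OF A1 G1I]] .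
lemma xi_zero: "\<xi> (lzero L1) = lzero L2"
proof -
  have "\<xi> (lzero L1) = \<xi> (lsmult L1 0 (lzero L1))" using leib.zero_smult[OF A1] leib.zero_closed[OF A1] by simp
  also have "\<dots> = lsmult L2 0 (\<xi> (lzero L1))" using xi_smult zero_G1 by simp
  also have "\<dots> = lzero L2" using leib.zero_smult[OF A2] xi_C2[OF zero_G1] by simp
  finally show ?thesis .
qed

lemma words_rel: "(\<forall>i\<le>n + m. (z1 i, z2 i) \<in> K) \<Longrightarrow> \<xi> (lie_word L1 z1 (n + m)) = lie_word L2 z2 (n + m)"
proof (induction m arbitrary: z1 z2)
  case 0
  then show ?case using cond K_mem by simp
next
  case (Suc m)
  have r: "\<forall>i\<le>n + m. (col L1 z1 i, col L2 z2 i) \<in> K"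
  proof (intro allI impI)
    fix i assume i: "i \<le> n + m"
    show "(col L1 z1 i, col L2 z2 i) \<in> K"
    proof (cases "i = 0")
      case True
      have "(z1 0, z2 0) \<in> K" "(z1 1, z2 1) \<in> K" using Suc.prems by auto
      then show ?thesis using True K_s unfolding col_def by simp
    next
      case False
      then show ?thesis using Suc.prems i unfolding col_def by simp
    qed
  qed
  have "\<xi> (lie_word L1 z1 (n + Suc m)) = \<xi> (lie_word L1 (col L1 z1) (n + m))"
    using lie_word_col[of L1 z1 "n + m"] by simp
  also have "\<dots> = lie_word L2 (col L2 z2) (n + m)" using Suc.IH[OF r] .
  also have "\<dots> = lie_word L2 z2 (n + Suc m)" using lie_word_col[of L2 z2 "n + m"] by simp
  finally show ?case .
qed

definition "U = {g \<in> G1. \<forall>m z y. (\<forall>j. 0 < j \<longrightarrow> (z j, y j) \<in> K) \<longrightarrow>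
   \<xi> (lie_word L1 (z(0 := g)) m) = lie_word L2 (y(0 := \<xi> g)) m}"

lemma U_D: assumes "g \<in> U" "\<forall>j. 0 < j \<longrightarrow> (z j, y j) \<in> K"
  shows "\<xi> (lie_word L1 (z(0 := g)) m) = lie_word L2 (y(0 := \<xi> g)) m"
proof -
  have "\<forall>m z y. (\<forall>j. 0 < j \<longrightarrow> (z j, y j) \<in> K) \<longrightarrow>
   \<xi> (lie_word L1 (z(0 := g)) m) = lie_word L2 (y(0 := \<xi> g)) m" using assms(1) unfolding U_def by simp
  from this[THEN spec[of _ m], THEN spec[of _ z], THEN spec[of _ y], THEN mp, OF assms(2)] show ?thesis .
qed

lemma U_G: "g \<in> U \<Longrightarrow> g \<in> G1" unfolding U_def by simp

lemma U_words: "Wd L1 n \<subseteq> U"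
proof
  fix w assume "w \<in> Wd L1 n"
  then obtain x where x: "\<forall>i\<le>n. x i \<in> C1" "w = lie_word L1 x n" unfolding Wd_def by auto
  define x' where "x' = (\<lambda>i. SOME h. (x i, h) \<in> K)"
  have xx: "(x i, x' i) \<in> K" if "i \<le> n" for i
  proof -
    have "\<exists>h. (x i, h) \<in> K" using ex_right x that by auto
    then show ?thesis unfolding x'_def by (rule someI_ex)
  qed
  have wG: "w \<in> G1" using x leib.lw_lower[OF A1] by simp
  have xiw: "\<xi> w = lie_word L2 x' n" using words_rel[of 0 x x'] xx x by simp
  have "\<xi> (lie_word L1 (z(0 := w)) m) = lie_word L2 (y(0 := \<xi> w)) m"
    if Kr: "\<forall>j. 0 < j \<longrightarrow> (z j, y j) \<in> K" for m z y
  proof -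
    have "\<xi> (lie_word L1 (z(0 := w)) m) = \<xi> (lie_word L1 (\<lambda>i. if i \<le> n then x i else z (i - n)) (n + m))"
      unfolding x(2) lw_join ..
    also have "\<dots> = lie_word L2 (\<lambda>i. if i \<le> n then x' i else y (i - n)) (n + m)"
      by (rule words_rel) (use xx Kr in auto)
    also have "\<dots> = lie_word L2 (y(0 := \<xi> w)) m" unfolding xiw lw_join ..
    finally show ?thesis .
  qed
  then show "w \<in> U" unfolding U_def using wG by simp
qed

lemma Kr_C1: "\<forall>j. 0 < j \<longrightarrow> (z j, y j) \<in> K \<Longrightarrow> \<forall>j. 0 < j \<and> j \<le> m \<longrightarrow> z j \<in> C1"
  using K_mem by simp
lemma Kr_C2: "\<forall>j. 0 < j \<longrightarrow> (z j, y j) \<in> K \<Longrightarrow> \<forall>j. 0 < j \<and> j \<le> m \<longrightarrow> y j \<in> C2"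
  using K_mem by simp

lemma U_zero: "lzero L1 \<in> U"
  unfolding U_def using zero_G1 xi_zero leib.lw_zero[OF A1 Kr_C1] leib.lw_zero[OF A2 Kr_C2] by simp

lemma U_ideal: assumes n0: "0 < n" shows "ideal L1 U"
proof (rule leib.ideal_I[OF A1])
  show "U \<subseteq> C1" unfolding U_def using G1C by auto
  show "lzero L1 \<in> U" by (rule U_zero)
next
  fix g1 g2 assume g1: "g1 \<in> U" and g2: "g2 \<in> U"
  have gG: "g1 \<in> G1" "g2 \<in> G1" using g1 g2 U_G by auto
  have gC: "g1 \<in> C1" "g2 \<in> C1" using gG G1C by auto
  have sG: "ladd L1 g1 g2 \<in> G1" using gG leib.sp_add[OF A1 leib.ideal_subspace[OF A1 G1I]] by simp
  have "\<xi> (lie_word L1 (z(0 := ladd L1 g1 g2)) m) = lie_word L2 (y(0 := \<xi> (ladd L1 g1 g2))) m"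
    if Kr: "\<forall>j. 0 < j \<longrightarrow> (z j, y j) \<in> K" for m z y
  proof -
    note c1 = Kr_C1[OF Kr, of m] and c2 = Kr_C2[OF Kr, of m]
    have w1: "lie_word L1 (z(0 := g1)) m \<in> G1" "lie_word L1 (z(0 := g2)) m \<in> G1"
      using leib.lw_ideal_closed[OF A1 G1I] gG c1 by auto
    have "\<xi> (lie_word L1 (z(0 := ladd L1 g1 g2)) m)
        = \<xi> (ladd L1 (lie_word L1 (z(0 := g1)) m) (lie_word L1 (z(0 := g2)) m))"
      using leib.lw_add[OF A1 c1 gC] by simp
    also have "\<dots> = ladd L2 (\<xi> (lie_word L1 (z(0 := g1)) m)) (\<xi> (lie_word L1 (z(0 := g2)) m))"
      using xi_add w1 by simp
    also have "\<dots> = ladd L2 (lie_word L2 (y(0 := \<xi> g1)) m) (lie_word L2 (y(0 := \<xi> g2)) m)"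
      using U_D[OF g1 Kr] U_D[OF g2 Kr] by simp
    also have "\<dots> = lie_word L2 (y(0 := ladd L2 (\<xi> g1) (\<xi> g2))) m"
      using leib.lw_add[OF A2 c2 xi_C2 xi_C2] gG by simp
    also have "\<dots> = lie_word L2 (y(0 := \<xi> (ladd L1 g1 g2))) m" using xi_add gG by simp
    finally show ?thesis .
  qed
  then show "ladd L1 g1 g2 \<in> U" unfolding U_def using sG by simp
next
  fix c g assume g: "g \<in> U"
  have gG: "g \<in> G1" using g U_G by auto
  have gC: "g \<in> C1" using gG G1C by auto
  have sG: "lsmult L1 c g \<in> G1" using gG leib.sp_smult[OF A1 leib.ideal_subspace[OF A1 G1I]] by simp
  have "\<xi> (lie_word L1 (z(0 := lsmult L1 c g)) m) = lie_word L2 (y(0 := \<xi> (lsmult L1 c g))) m"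
    if Kr: "\<forall>j. 0 < j \<longrightarrow> (z j, y j) \<in> K" for m z y
  proof -
    note c1 = Kr_C1[OF Kr, of m] and c2 = Kr_C2[OF Kr, of m]
    have w1: "lie_word L1 (z(0 := g)) m \<in> G1"
      using leib.lw_ideal_closed[OF A1 G1I] gG c1 by auto
    have "\<xi> (lie_word L1 (z(0 := lsmult L1 c g)) m) = \<xi> (lsmult L1 c (lie_word L1 (z(0 := g)) m))"
      using leib.lw_smult[OF A1 c1 gC] by simp
    also have "\<dots> = lsmult L2 c (\<xi> (lie_word L1 (z(0 := g)) m))" using xi_smult w1 by simp
    also have "\<dots> = lsmult L2 c (lie_word L2 (y(0 := \<xi> g)) m)" using U_D[OF g Kr] by simp
    also have "\<dots> = lie_word L2 (y(0 := lsmult L2 c (\<xi> g))) m"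
      using leib.lw_smult[OF A2 c2 xi_C2[OF gG]] by simp
    also have "\<dots> = lie_word L2 (y(0 := \<xi> (lsmult L1 c g))) m" using xi_smult gG by simp
    finally show ?thesis .
  qed
  then show "lsmult L1 c g \<in> U" unfolding U_def using sG by simp
next
  fix x g assume x: "x \<in> C1" and g: "g \<in> U"
  have gG: "g \<in> G1" using g U_G by auto
  have gC: "g \<in> C1" using gG G1C by auto
  have lz: "lbr L1 x g = lzero L1" using leib.left_zero[OF A1 n0 gG x] .
  then show "lbr L1 x g \<in> U" using U_zero by simp
  have bs: "lbr L1 g x = lie_br L1 g x" unfolding lie_br_def using lz leib.add_zero[OF A1] leib.br_closed[OF A1 gC x] by simp
  have sG: "lie_br L1 g x \<in> G1" using leib.id_s[OF A1 G1I x gG] .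
  obtain b where b: "(x, b) \<in> K" using ex_right[OF x] by auto
  have key: "\<xi> (lie_br L1 g x) = lie_br L2 (\<xi> g) b"
  proof -
    have "\<forall>j. 0 < j \<longrightarrow> ((\<lambda>_. x) j, (\<lambda>_. b) j) \<in> K" using b by simp
    then have "\<xi> (lie_word L1 ((\<lambda>_. x)(0 := g)) 1) = lie_word L2 ((\<lambda>_. b)(0 := \<xi> g)) 1"
      by (rule U_D[OF g])
    then show ?thesis by simp
  qed
  have "\<xi> (lie_word L1 (z(0 := lie_br L1 g x)) m) = lie_word L2 (y(0 := \<xi> (lie_br L1 g x))) m"
    if Kr: "\<forall>j. 0 < j \<longrightarrow> (z j, y j) \<in> K" for m z y
  proof -
    define z' where "z' = (\<lambda>i. if i = 0 then g else if i = 1 then x else z (i - 1))"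
    define y' where "y' = (\<lambda>i. if i = 0 then \<xi> g else if i = 1 then b else y (i - 1))"
    have Kr': "\<forall>j. 0 < j \<longrightarrow> (z' j, y' j) \<in> K" using Kr b unfolding z'_def y'_def by auto
    have cz: "col L1 z' = z(0 := lie_br L1 g x)" unfolding col_def z'_def by (rule ext) simp
    have cy: "col L2 y' = y(0 := lie_br L2 (\<xi> g) b)" unfolding col_def y'_def by (rule ext) simp
    have z0: "z'(0 := g) = z'" unfolding z'_def by (rule ext) simp
    have y0: "y'(0 := \<xi> g) = y'" unfolding y'_def by (rule ext) simp
    have "\<xi> (lie_word L1 (z(0 := lie_br L1 g x)) m) = \<xi> (lie_word L1 (z'(0 := g)) (Suc m))"
      unfolding z0 lie_word_col cz ..
    also have "\<dots> = lie_word L2 (y'(0 := \<xi> g)) (Suc m)" by (rule U_D[OF g Kr'])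
    also have "\<dots> = lie_word L2 (y(0 := \<xi> (lie_br L1 g x))) m" unfolding y0 lie_word_col cy key ..
    finally show ?thesis .
  qed
  then show "lbr L1 g x \<in> U" unfolding bs U_def using sG by simp
qed

lemma G1_U: assumes "0 < n" shows "G1 \<subseteq> U"
proof -
  have "ideal_gen L1 (Wd L1 n) \<subseteq> U" using leib.ideal_gen_least[OF A1 U_ideal[OF assms] U_words] .
  then show ?thesis using leib.lower_Wd[OF A1, of n] by auto
qed

lemma U_lemma: assumes n0: "0 < n" and g: "g \<in> G1" and ab: "(a, b) \<in> K"
  shows "\<xi> (lie_br L1 g a) = lie_br L2 (\<xi> g) b"
proof -
  have "g \<in> U" using G1_U[OF n0] g by auto
  moreover have "\<forall>j. 0 < j \<longrightarrow> ((\<lambda>_. a) j, (\<lambda>_. b) j) \<in> K" using ab by simp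
  ultimately have "\<xi> (lie_word L1 ((\<lambda>_. a)(0 := g)) 1) = lie_word L2 ((\<lambda>_. b)(0 := \<xi> g)) 1"
    by (rule U_D)
  then show ?thesis by simp
qed

end


context isoc begin

definition "T = {k. k \<in> K \<and> fst k \<in> G1 \<and> snd k = \<xi> (fst k)}"

lemma T_mem: "(g, h) \<in> T \<longleftrightarrow> (g, h) \<in> K \<and> g \<in> G1 \<and> h = \<xi> g" unfolding T_def by simp

lemma T_zero: "(lzero L1, lzero L2) \<in> T" using T_mem K_zero zero_G1 xi_zero by simp

lemma T_ideal: assumes n0: "0 < n" shows "ideal KA T"
proof (rule leib.ideal_I[OF KL]; unfold restrict_simps)
  show "T \<subseteq> K" unfolding T_def by auto
  show "lzero (dsum L1 L2) \<in> T" using T_zero by simp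
next
  fix x y assume "x \<in> T" "y \<in> T"
  then obtain g g' where x: "x = (g, \<xi> g)" "(g, \<xi> g) \<in> K" "g \<in> G1" and y: "y = (g', \<xi> g')" "(g', \<xi> g') \<in> K" "g' \<in> G1"
    unfolding T_def by (cases x, cases y) auto
  have "ladd L1 g g' \<in> G1" using x y leib.sp_add[OF A1 leib.ideal_subspace[OF A1 G1I]] by simp
  then show "ladd (dsum L1 L2) x y \<in> T" using x y K_add xi_add T_mem by simp
next
  fix c x assume "x \<in> T"
  then obtain g where x: "x = (g, \<xi> g)" "(g, \<xi> g) \<in> K" "g \<in> G1"
    unfolding T_def by (cases x) auto
  have "lsmult L1 c g \<in> G1" using x leib.sp_smult[OF A1 leib.ideal_subspace[OF A1 G1I]] by simp
  then show "lsmult (dsum L1 L2) c x \<in> T" using x K_smult xi_smult T_mem by simp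
next
  fix x i assume xK: "x \<in> K" and "i \<in> T"
  then obtain g where i: "i = (g, \<xi> g)" "(g, \<xi> g) \<in> K" "g \<in> G1"
    unfolding T_def by (cases i) auto
  obtain a b where x: "x = (a, b)" "(a, b) \<in> K" using xK by (cases x) auto
  have ab: "a \<in> C1" "b \<in> C2" using x K_mem by auto
  have l1: "lbr L1 a g = lzero L1" using leib.left_zero[OF A1 n0 i(3) ab(1)] .
  have l2: "lbr L2 b (\<xi> g) = lzero L2" using leib.left_zero[OF A2 n0 xi_G2[OF i(3)] ab(2)] .
  show "lbr (dsum L1 L2) x i \<in> T" using x i l1 l2 T_zero by simp
  have gC: "g \<in> C1" using i G1C by auto
  have s1: "lbr L1 g a = lie_br L1 g a" unfolding lie_br_def using l1 leib.add_zero[OF A1] leib.br_closed[OF A1 gC ab(1)] by simp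
  have s2: "lbr L2 (\<xi> g) b = lie_br L2 (\<xi> g) b" unfolding lie_br_def using l2 leib.add_zero[OF A2] leib.br_closed[OF A2 xi_C2[OF i(3)] ab(2)] by simp
  have e: "\<xi> (lbr L1 g a) = lbr L2 (\<xi> g) b" unfolding s1 s2 using U_lemma[OF n0 i(3) x(2)] .
  have G: "lbr L1 g a \<in> G1" using leib.id_brr[OF A1 G1I ab(1) i(3)] .
  have KK: "(lbr L1 g a, lbr L2 (\<xi> g) b) \<in> K" using K_br[OF i(2) x(2)] .
  show "lbr (dsum L1 L2) i x \<in> T" using x i e G KK T_mem by simp
qed

lemma Wd_T: "Wd KA n \<subseteq> T"
proof
  fix w assume "w \<in> Wd KA n"
  then obtain x where x: "\<forall>i\<le>n. x i \<in> K" "w = lie_word KA x n" unfolding Wd_def by auto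
  have xx: "fst (x i) \<in> C1 \<and> snd (x i) \<in> C2 \<and> \<eta> (c1 (fst (x i))) = c2 (snd (x i))" if "i \<le> n" for i
    using x that K_mem[of "fst (x i)" "snd (x i)"] by simp
  have wK: "w \<in> K" using leib.lw_closed[OF KL] x by simp
  have w: "w = (lie_word L1 (\<lambda>i. fst (x i)) n, lie_word L2 (\<lambda>i. snd (x i)) n)" using x KA_lw by simp
  have g: "lie_word L1 (\<lambda>i. fst (x i)) n \<in> G1" using leib.lw_lower[OF A1] xx by simp
  have e: "\<xi> (lie_word L1 (\<lambda>i. fst (x i)) n) = lie_word L2 (\<lambda>i. snd (x i)) n" using cond xx by simp
  show "w \<in> T" using wK w g e T_mem by simp
qed

lemma gamma_T: "lower_lie KA (Suc n) \<subseteq> T"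
proof (cases "n = 0")
  case True
  show ?thesis
  proof
    fix k assume "k \<in> lower_lie KA (Suc n)"
    then have kK: "k \<in> K" using True by simp
    then obtain g h where k: "k = (g, h)" "g \<in> C1" "h \<in> C2" "\<eta> (c1 g) = c2 h" using K_mem by (cases k) auto
    have "\<xi> (lie_word L1 (\<lambda>_. g) n) = lie_word L2 (\<lambda>_. h) n" using cond k by simp
    then have "\<xi> g = h" using True by simp
    then show "k \<in> T" using k kK True T_mem by simp
  qed
next
  case False
  then have n0: "0 < n" by simp
  have "ideal_gen KA (Wd KA n) \<subseteq> T" using leib.ideal_gen_least[OF KL T_ideal[OF n0] Wd_T] .
  then show ?thesis using leib.lower_Wd[OF KL, of n] by auto
qed

lemma part_b: "lower_lie KA (Suc n) = {(g, \<xi> g) | g. g \<in> G1}"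
proof
  show "lower_lie KA (Suc n) \<subseteq> {(g, \<xi> g) | g. g \<in> G1}"
  proof
    fix k assume "k \<in> lower_lie KA (Suc n)"
    then have "k \<in> T" using gamma_T by auto
    then obtain g where "k = (g, \<xi> g)" "g \<in> G1" unfolding T_def by (cases k) auto
    then show "k \<in> {(g, \<xi> g) | g. g \<in> G1}" by blast
  qed
  show "{(g, \<xi> g) | g. g \<in> G1} \<subseteq> lower_lie KA (Suc n)"
  proof
    fix k assume "k \<in> {(g, \<xi> g) | g. g \<in> G1}"
    then obtain g where k: "k = (g, \<xi> g)" "g \<in> G1" by blast
    have "g \<in> fst ` lower_lie KA (Suc n)" using img_lower[OF KL A1 fst_hom fst_surj, of n] k by simp
    then obtain k' where k': "k' \<in> lower_lie KA (Suc n)" "fst k' = g" by auto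
    then have "k' \<in> T" using gamma_T by auto
    then have "k' = k" using k k' unfolding T_def by (cases k') auto
    then show "k \<in> lower_lie KA (Suc n)" using k' by simp
  qed
qed

lemma zero_gammaK: "(lzero L1, lzero L2) \<in> lower_lie KA (Suc n)"
  using leib.sp_zero[OF KL leib.ideal_subspace[OF KL leib.lower_lie_ideal[OF KL]]] by simp

definition "Z1s = {(g, lzero L2) | g. g \<in> Z1n}"
definition "Z2s = {(lzero L1, h) | h. h \<in> Z2n}"

lemma Z1n_C: "Z1n \<subseteq> C1" using leib.upper_lie_C[OF A1] .
lemma Z2n_C: "Z2n \<subseteq> C2" using leib.upper_lie_C[OF A2] .

lemma Z1s_K: "(g, lzero L2) \<in> K" if "g \<in> Z1n" for g
proof -
  have gC: "g \<in> C1" using that Z1n_C by auto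
  have "c1 g = c1 (lzero L1)" using leib.coset_zero_iff[OF A1 Z1I gC] that by simp
  then show ?thesis using K_mem gC leib.zero_closed[OF A2] eta_zero by simp
qed

lemma Z2s_K: "(lzero L1, h) \<in> K" if "h \<in> Z2n" for h
proof -
  have hC: "h \<in> C2" using that Z2n_C by auto
  have "c2 h = c2 (lzero L2)" using leib.coset_zero_iff[OF A2 Z2I hC] that by simp
  then show ?thesis using K_mem hC leib.zero_closed[OF A1] eta_zero by simp
qed

lemma Z1_ideal: "ideal KA Z1s"
proof (rule leib.ideal_I[OF KL]; unfold restrict_simps)
  note S = leib.ideal_subspace[OF A1 Z1I]
  show "Z1s \<subseteq> K" unfolding Z1s_def using Z1s_K by auto
  show "lzero (dsum L1 L2) \<in> Z1s" unfolding Z1s_def using leib.sp_zero[OF A1 S] by simp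
next
  note S = leib.ideal_subspace[OF A1 Z1I]
  fix x y assume "x \<in> Z1s" "y \<in> Z1s"
  then obtain g g' where "x = (g, lzero L2)" "y = (g', lzero L2)" "g \<in> Z1n" "g' \<in> Z1n" unfolding Z1s_def by auto
  then show "ladd (dsum L1 L2) x y \<in> Z1s" unfolding Z1s_def using leib.sp_add[OF A1 S] leib.add_zero[OF A2] leib.zero_closed[OF A2] by simp
next
  note S = leib.ideal_subspace[OF A1 Z1I]
  fix c x assume "x \<in> Z1s"
  then obtain g where "x = (g, lzero L2)" "g \<in> Z1n" unfolding Z1s_def by auto
  then show "lsmult (dsum L1 L2) c x \<in> Z1s" unfolding Z1s_def using leib.sp_smult[OF A1 S] leib.smult_zero[OF A2] by simp
next
  fix x i assume xK: "x \<in> K" and "i \<in> Z1s"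
  then obtain g where i: "i = (g, lzero L2)" "g \<in> Z1n" unfolding Z1s_def by auto
  obtain a b where x: "x = (a, b)" "a \<in> C1" "b \<in> C2" using xK K_mem by (cases x) auto
  show "lbr (dsum L1 L2) x i \<in> Z1s" unfolding Z1s_def
    using i x leib.id_brl[OF A1 Z1I] leib.br_zero_r[OF A2] by simp
  show "lbr (dsum L1 L2) i x \<in> Z1s" unfolding Z1s_def
    using i x leib.id_brr[OF A1 Z1I] leib.br_zero_l[OF A2] by simp
qed

lemma Z2_ideal: "ideal KA Z2s"
proof (rule leib.ideal_I[OF KL]; unfold restrict_simps)
  note S = leib.ideal_subspace[OF A2 Z2I]
  show "Z2s \<subseteq> K" unfolding Z2s_def using Z2s_K by auto
  show "lzero (dsum L1 L2) \<in> Z2s" unfolding Z2s_def using leib.sp_zero[OF A2 S] by simp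
next
  note S = leib.ideal_subspace[OF A2 Z2I]
  fix x y assume "x \<in> Z2s" "y \<in> Z2s"
  then obtain g g' where "x = (lzero L1, g)" "y = (lzero L1, g')" "g \<in> Z2n" "g' \<in> Z2n" unfolding Z2s_def by auto
  then show "ladd (dsum L1 L2) x y \<in> Z2s" unfolding Z2s_def using leib.sp_add[OF A2 S] leib.add_zero[OF A1] leib.zero_closed[OF A1] by simp
next
  note S = leib.ideal_subspace[OF A2 Z2I]
  fix c x assume "x \<in> Z2s"
  then obtain g where "x = (lzero L1, g)" "g \<in> Z2n" unfolding Z2s_def by auto
  then show "lsmult (dsum L1 L2) c x \<in> Z2s" unfolding Z2s_def using leib.sp_smult[OF A2 S] leib.smult_zero[OF A1] by simp
next
  fix x i assume xK: "x \<in> K" and "i \<in> Z2s"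
  then obtain g where i: "i = (lzero L1, g)" "g \<in> Z2n" unfolding Z2s_def by auto
  obtain a b where x: "x = (a, b)" "a \<in> C1" "b \<in> C2" using xK K_mem by (cases x) auto
  show "lbr (dsum L1 L2) x i \<in> Z2s" unfolding Z2s_def
    using i x leib.id_brl[OF A2 Z2I] leib.br_zero_r[OF A1] by simp
  show "lbr (dsum L1 L2) i x \<in> Z2s" unfolding Z2s_def
    using i x leib.id_brr[OF A2 Z2I] leib.br_zero_l[OF A1] by simp
qed

lemma Z1_inter: "Z1s \<inter> lower_lie KA (Suc n) = {(lzero L1, lzero L2)}"
proof
  show "Z1s \<inter> lower_lie KA (Suc n) \<subseteq> {(lzero L1, lzero L2)}"
  proof
    fix k assume k: "k \<in> Z1s \<inter> lower_lie KA (Suc n)"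
    then obtain g where g: "k = (g, lzero L2)" unfolding Z1s_def by auto
    have "k \<in> T" using k gamma_T by auto
    then have gG: "g \<in> G1" and e: "lzero L2 = \<xi> g" using g T_mem by auto
    have "g = lzero L1" using inj_onD[OF xi_inj, of g "lzero L1"] e xi_zero gG zero_G1 by simp
    then show "k \<in> {(lzero L1, lzero L2)}" using g by simp
  qed
  show "{(lzero L1, lzero L2)} \<subseteq> Z1s \<inter> lower_lie KA (Suc n)"
    using zero_gammaK leib.sp_zero[OF A1 leib.ideal_subspace[OF A1 Z1I]] unfolding Z1s_def by simp
qed

lemma Z2_inter: "Z2s \<inter> lower_lie KA (Suc n) = {(lzero L1, lzero L2)}"
proof
  show "Z2s \<inter> lower_lie KA (Suc n) \<subseteq> {(lzero L1, lzero L2)}"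
  proof
    fix k assume k: "k \<in> Z2s \<inter> lower_lie KA (Suc n)"
    then obtain h where g: "k = (lzero L1, h)" unfolding Z2s_def by auto
    have "k \<in> T" using k gamma_T by auto
    then have "h = \<xi> (lzero L1)" using g T_mem by auto
    then show "k \<in> {(lzero L1, lzero L2)}" using g xi_zero by simp
  qed
  show "{(lzero L1, lzero L2)} \<subseteq> Z2s \<inter> lower_lie KA (Suc n)"
    using zero_gammaK leib.sp_zero[OF A2 leib.ideal_subspace[OF A2 Z2I]] unfolding Z2s_def by simp
qed

lemma iso1: "isomorphic L1 (quot KA Z2s)"
proof -
  have ker: "\<forall>x\<in>lcarrier KA. fst x = lzero L1 \<longleftrightarrow> x \<in> Z2s"
  proof
    fix x assume "x \<in> lcarrier KA"
    then obtain g h where x: "x = (g, h)" "g \<in> C1" "h \<in> C2" "\<eta> (c1 g) = c2 h" using K_mem by (cases x) auto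
    show "fst x = lzero L1 \<longleftrightarrow> x \<in> Z2s"
    proof
      assume "fst x = lzero L1"
      then have g0: "g = lzero L1" using x by simp
      then have "c2 h = c2 (lzero L2)" using x eta_zero by simp
      then have "h \<in> Z2n" using leib.coset_zero_iff[OF A2 Z2I x(3)] by simp
      then show "x \<in> Z2s" unfolding Z2s_def using x g0 by simp
    next
      assume "x \<in> Z2s" then show "fst x = lzero L1" unfolding Z2s_def by auto
    qed
  qed
  show ?thesis unfolding isomorphic_def using first_iso[OF KL Z2_ideal A1 fst_hom fst_surj ker] by blast
qed

lemma iso2: "isomorphic L2 (quot KA Z1s)"
proof -
  have ker: "\<forall>x\<in>lcarrier KA. snd x = lzero L2 \<longleftrightarrow> x \<in> Z1s"
  proof
    fix x assume "x \<in> lcarrier KA"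
    then obtain g h where x: "x = (g, h)" "g \<in> C1" "h \<in> C2" "\<eta> (c1 g) = c2 h" using K_mem by (cases x) auto
    show "snd x = lzero L2 \<longleftrightarrow> x \<in> Z1s"
    proof
      assume "snd x = lzero L2"
      then have h0: "h = lzero L2" using x by simp
      then have "\<eta> (c1 g) = \<eta> (c1 (lzero L1))" using x eta_zero by simp
      moreover have "c1 g \<in> lcarrier Q1" "c1 (lzero L1) \<in> lcarrier Q1"
        using x leib.quot_carrier[OF A1] leib.zero_closed[OF A1] by auto
      ultimately have "c1 g = c1 (lzero L1)" using eta_bij unfolding bij_betw_def inj_on_def by blast
      then have "g \<in> Z1n" using leib.coset_zero_iff[OF A1 Z1I x(2)] by simp
      then show "x \<in> Z1s" unfolding Z1s_def using x h0 by simp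
    next
      assume "x \<in> Z1s" then show "snd x = lzero L2" unfolding Z1s_def by auto
    qed
  qed
  show ?thesis unfolding isomorphic_def using first_iso[OF KL Z1_ideal A2 snd_hom snd_surj ker] by blast
qed

lemma L1_inv:
  assumes H: "\<forall>i\<le>n. u i \<in> C1 \<and> v i \<in> C1 \<and> c1 (u i) = c1 (v i)"
  shows "lie_word L1 u n = lie_word L1 v n"
proof -
  define w where "w = (\<lambda>i. SOME h. (u i, h) \<in> K)"
  have uw: "(u i, w i) \<in> K" if "i \<le> n" for i
  proof -
    have "\<exists>h. (u i, h) \<in> K" using ex_right H that by auto
    then show ?thesis unfolding w_def by (rule someI_ex)
  qed
  have c1: "\<forall>i\<le>n. u i \<in> C1 \<and> w i \<in> C2 \<and> \<eta> (c1 (u i)) = c2 (w i)" using uw K_mem by simp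
  have c2: "\<forall>i\<le>n. v i \<in> C1 \<and> w i \<in> C2 \<and> \<eta> (c1 (v i)) = c2 (w i)" using uw K_mem H by simp
  have "\<xi> (lie_word L1 u n) = \<xi> (lie_word L1 v n)" using cond[OF c1] cond[OF c2] by simp
  moreover have "lie_word L1 u n \<in> G1" "lie_word L1 v n \<in> G1" using leib.lw_lower[OF A1] H by auto
  ultimately show ?thesis using inj_onD[OF xi_inj] by blast
qed

lemma K_inv:
  assumes H: "\<forall>i\<le>n. x i \<in> lcarrier KA \<and> y i \<in> lcarrier KA \<and>
        coset KA (upper_lie KA n) (x i) = coset KA (upper_lie KA n) (y i)"
  shows "lie_word KA x n = lie_word KA y n"
proof -
  have ZKI: "ideal KA (upper_lie KA n)" using leib.upper_lie_ideal[OF KL] .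
  have f: "c1 (fst (x i)) = c1 (fst (y i))" if i: "i \<le> n" for i
  proof -
    have xy: "x i \<in> K" "y i \<in> K" using H i by auto
    have xC: "x i \<in> lcarrier KA" "y i \<in> lcarrier KA" using xy by simp_all
    have e: "coset KA (upper_lie KA n) (x i) = coset KA (upper_lie KA n) (y i)" using H i by blast
    have "y i \<in> coset KA (upper_lie KA n) (x i)" using iffD1[OF leib.coset_eq_iff[OF KL ZKI xC] e] .
    then obtain z where z: "z \<in> upper_lie KA n" "y i = ladd KA (x i) z" using leib.coset_memD[OF KL] by metis
    have "fst z \<in> Z1n" using img_upper[OF KL A1 fst_hom fst_surj, of n] z by auto
    moreover have "fst (y i) = ladd L1 (fst (x i)) (fst z)" using z by (cases "x i", cases z) simp
    ultimately have "fst (y i) \<in> c1 (fst (x i))" using leib.coset_memI[OF A1] by metis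
    moreover have "fst (x i) \<in> C1" "fst (y i) \<in> C1" using xy K_sub by auto
    ultimately show ?thesis using leib.coset_eq_iff[OF A1 Z1I] by simp
  qed
  have C: "fst (x i) \<in> C1" "fst (y i) \<in> C1" if "i \<le> n" for i using H that K_sub by auto
  have e1: "lie_word L1 (\<lambda>i. fst (x i)) n = lie_word L1 (\<lambda>i. fst (y i)) n"
    using L1_inv f C by simp
  have "lie_word KA x n \<in> T" "lie_word KA y n \<in> T"
    using gamma_T leib.lw_lower[OF KL] H by auto
  then have "lie_word L2 (\<lambda>i. snd (x i)) n = \<xi> (lie_word L1 (\<lambda>i. fst (x i)) n)"
    "lie_word L2 (\<lambda>i. snd (y i)) n = \<xi> (lie_word L1 (\<lambda>i. fst (y i)) n)"
    unfolding KA_lw T_mem by auto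
  then show ?thesis unfolding KA_lw using e1 by simp
qed

lemma isoc1: "lie_isoclinic (quot KA Z2s) KA n"
  by (rule isoclinic_quot[OF KL Z2_ideal]) (use Z2_inter K_inv in auto)

lemma isoc2: "lie_isoclinic (quot KA Z1s) KA n"
  by (rule isoclinic_quot[OF KL Z1_ideal]) (use Z1_inter K_inv in auto)

end

theorem mainTheorem7:
  fixes L1 :: "('k::field, 'a) lalg" and L2 :: "('k, 'b) lalg"
    and n :: nat and \<eta> :: "'a set \<Rightarrow> 'b set" and \<xi> :: "'a \<Rightarrow> 'b"
    and K :: "('a \<times> 'b) set" and Z1 Z2 :: "('a \<times> 'b) set"
  assumes half: "(2::'k) \<noteq> 0"
    and L1: "leibniz_algebra L1" and L2: "leibniz_algebra L2"
    and iso: "lie_isoclinism L1 L2 n \<eta> \<xi>"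
    and K_def: "K = {(g, h). g \<in> lcarrier L1 \<and> h \<in> lcarrier L2 \<and>
                  \<eta> (coset L1 (upper_lie L1 n) g) = coset L2 (upper_lie L2 n) h}"
    and Z1_def: "Z1 = {(g, lzero L2) | g. g \<in> upper_lie L1 n}"
    and Z2_def: "Z2 = {(lzero L1, h) | h. h \<in> upper_lie L2 n}"
  shows "subalgebra (dsum L1 L2) K
    \<and> lower_lie (restrict_alg (dsum L1 L2) K) (Suc n)
        = {(g, \<xi> g) | g. g \<in> lower_lie L1 (Suc n)}
    \<and> ideal (restrict_alg (dsum L1 L2) K) Z1
    \<and> ideal (restrict_alg (dsum L1 L2) K) Z2
    \<and> Z1 \<inter> lower_lie (restrict_alg (dsum L1 L2) K) (Suc n) = {(lzero L1, lzero L2)}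
    \<and> Z2 \<inter> lower_lie (restrict_alg (dsum L1 L2) K) (Suc n) = {(lzero L1, lzero L2)}
    \<and> isomorphic L1 (quot (restrict_alg (dsum L1 L2) K) Z2)
    \<and> isomorphic L2 (quot (restrict_alg (dsum L1 L2) K) Z1)
    \<and> lie_isoclinic (quot (restrict_alg (dsum L1 L2) K) Z2) (restrict_alg (dsum L1 L2) K) n
    \<and> lie_isoclinic (quot (restrict_alg (dsum L1 L2) K) Z1) (restrict_alg (dsum L1 L2) K) n"
proof -
  have "isoc L1 L2 n \<eta> \<xi> K" unfolding isoc_def leib_def using L1 L2 iso K_def by simp
  then interpret isoc L1 L2 n \<eta> \<xi> K .
  have Z1: "Z1 = Z1s" unfolding Z1_def Z1s_def ..
  have Z2: "Z2 = Z2s" unfolding Z2_def Z2s_def ..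
  show ?thesis unfolding Z1 Z2
    using K_subalg part_b Z1_ideal Z2_ideal Z1_inter Z2_inter iso1 iso2 isoc1 isoc2 by simp
qed

end
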